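(* Let $KR=\{(x,y,s,t)\in\mathbb{C}^4: x^2y+x+s^2+t^3=0\}$ be the Koras-Russell cubic threefold and $H=\{x=0\}\cap KR$. Then $KR\setminus H$ has the density property.
   Context: A complex manifold $M$ has the density property if the Lie algebra generated by $\mathbb{C}$-complete holomorphic vector fields on $M$ is dense, in the compact-open topology, in the Lie algebra of all holomorphic vector fields on $M$. *)

theory Defs
  imports "HOL-Analysis.Analysis"
begin

text \<open>Complex n-space is modelled as complex ^ 'n. A complex (sub)manifold M is
  given as a subset of it; vector fields on M are maps into complex ^ 'n that
  vanish outside M.\<close>

definition complex_linear :: "(complex ^ 'n \<Rightarrow> complex ^ 'm) \<Rightarrow> bool" where
  "complex_linear L \<longleftrightarrow> (\<forall>c v. L (c *s v) = c *s L v)"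

definition holo_on :: "(complex ^ 'n \<Rightarrow> complex ^ 'm) \<Rightarrow> (complex ^ 'n) set \<Rightarrow> bool" where
  "holo_on f U \<longleftrightarrow> (\<forall>p\<in>U. \<exists>L. (f has_derivative L) (at p) \<and> complex_linear L)"

definition holo_on_set :: "(complex ^ 'n \<Rightarrow> complex ^ 'm) \<Rightarrow> (complex ^ 'n) set \<Rightarrow> bool" where
  "holo_on_set f M \<longleftrightarrow> (\<forall>p\<in>M. \<exists>U g. open U \<and> p \<in> U \<and> holo_on g U \<and>
      (\<forall>q\<in>U \<inter> M. g q = f q))"

text \<open>Holomorphic tangent vectors: velocities of (at 0 complex differentiable)
  complex curves in M.\<close>
definition tangent_vec :: "(complex ^ 'n) set \<Rightarrow> complex ^ 'n \<Rightarrow> complex ^ 'n \<Rightarrow> bool" where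
  "tangent_vec M p v \<longleftrightarrow> (\<exists>\<gamma> e. e > 0 \<and> \<gamma> ` ball 0 e \<subseteq> M \<and> \<gamma> 0 = p \<and>
      (\<gamma> has_derivative (\<lambda>z. z *s v)) (at 0))"

definition holo_vf :: "(complex ^ 'n) set \<Rightarrow> (complex ^ 'n \<Rightarrow> complex ^ 'n) \<Rightarrow> bool" where
  "holo_vf M V \<longleftrightarrow> holo_on_set V M \<and> (\<forall>p\<in>M. tangent_vec M p (V p)) \<and>
      (\<forall>p. p \<notin> M \<longrightarrow> V p = 0)"

definition complete_vf :: "(complex ^ 'n) set \<Rightarrow> (complex ^ 'n \<Rightarrow> complex ^ 'n) \<Rightarrow> bool" where
  "complete_vf M V \<longleftrightarrow> holo_vf M V \<and>
     (\<exists>\<phi> :: complex \<Rightarrow> complex ^ 'n \<Rightarrow> complex ^ 'n. \<forall>p\<in>M. \<phi> 0 p = p \<and>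
        (\<forall>t. \<phi> t p \<in> M \<and> ((\<lambda>s. \<phi> s p) has_derivative (\<lambda>s. s *s V (\<phi> t p))) (at t)))"

text \<open>Lie bracket of tangent vector fields, computed via derivatives within M
  (these are determined on tangent vectors).\<close>
definition vf_bracket :: "(complex ^ 'n) set \<Rightarrow> (complex ^ 'n \<Rightarrow> complex ^ 'n) \<Rightarrow>
    (complex ^ 'n \<Rightarrow> complex ^ 'n) \<Rightarrow> complex ^ 'n \<Rightarrow> complex ^ 'n" where
  "vf_bracket M V W p = (if p \<in> M then
      (SOME L. (W has_derivative L) (at p within M)) (V p)
    - (SOME L. (V has_derivative L) (at p within M)) (W p) else 0)"

inductive_set complete_lie_alg :: "(complex ^ 'n) set \<Rightarrow> (complex ^ 'n \<Rightarrow> complex ^ 'n) set"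
  for M where
  gen: "complete_vf M V \<Longrightarrow> V \<in> complete_lie_alg M"
| zero: "(\<lambda>p. 0) \<in> complete_lie_alg M"
| add: "V \<in> complete_lie_alg M \<Longrightarrow> W \<in> complete_lie_alg M \<Longrightarrow> (\<lambda>p. V p + W p) \<in> complete_lie_alg M"
| smult: "V \<in> complete_lie_alg M \<Longrightarrow> (\<lambda>p. c *s V p) \<in> complete_lie_alg M"
| bracket: "V \<in> complete_lie_alg M \<Longrightarrow> W \<in> complete_lie_alg M \<Longrightarrow> vf_bracket M V W \<in> complete_lie_alg M"

text \<open>Density in the compact-open topology = approximation uniformly on compacta.\<close>
definition density_property :: "(complex ^ 'n) set \<Rightarrow> bool" where
  "density_property M \<longleftrightarrow> (\<forall>V K e. holo_vf M V \<and> compact K \<and> K \<subseteq> M \<and> e > 0 \<longrightarrow>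
     (\<exists>W\<in>complete_lie_alg M. \<forall>p\<in>K. norm (V p - W p) < e))"

text \<open>Koras-Russell cubic; coordinates (x,y,s,t) = (v$1, v$2, v$3, v$4).\<close>
definition KR :: "(complex ^ 4) set" where
  "KR = {v. (v$1)^2 * v$2 + v$1 + (v$3)^2 + (v$4)^3 = 0}"

definition KR_H :: "(complex ^ 4) set" where
  "KR_H = {v \<in> KR. v$1 = 0}"

end

theory Submission
  imports Defs "HOL-Complex_Analysis.Cauchy_Integral_Formula"
begin


definition vec4 :: "complex \<Rightarrow> complex \<Rightarrow> complex \<Rightarrow> complex \<Rightarrow> complex^4" where
  "vec4 a b c d = (\<chi> i. if i = 1 then a else if i = 2 then b else if i = 3 then c else d)"

lemma vec4_nth [simp]: "vec4 a b c d $ 1 = a" "vec4 a b c d $ 2 = b" "vec4 a b c d $ 3 = c" "vec4 a b c d $ 4 = d"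
  by (simp_all add: vec4_def)

lemma vec4_eta: "vec4 (v$1) (v$2) (v$3) (v$4) = v"
  by (simp add: vec_eq_iff forall_4)

lemma vec4_eq_iff: "vec4 a b c d = v \<longleftrightarrow> a = v$1 \<and> b = v$2 \<and> c = v$3 \<and> d = v$4"
  by (auto simp: vec_eq_iff forall_4)

lemma vec4_add: "vec4 a b c d + vec4 a' b' c' d' = vec4 (a+a') (b+b') (c+c') (d+d')"
  by (simp add: vec_eq_iff forall_4)
lemma vec4_diff: "vec4 a b c d - vec4 a' b' c' d' = vec4 (a-a') (b-b') (c-c') (d-d')"
  by (simp add: vec_eq_iff forall_4)
lemma vec4_smult: "k *s vec4 a b c d = vec4 (k*a) (k*b) (k*c) (k*d)"
  by (simp add: vec_eq_iff forall_4)
lemma vec4_zero: "vec4 0 0 0 0 = 0"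
  by (simp add: vec_eq_iff forall_4)

lemma norm_vec4: "norm (vec4 a b c d) \<le> norm a + norm b + norm c + norm d"
proof -
  have "norm (vec4 a b c d) = L2_set (\<lambda>i. norm (vec4 a b c d $ i)) UNIV"
    by (simp add: norm_vec_def)
  also have "\<dots> \<le> (\<Sum>i\<in>UNIV. norm (vec4 a b c d $ i))"
    by (rule L2_set_le_sum) auto
  finally show ?thesis by (simp add: sum_4)
qed

lemma bounded_linear_vec4: "bounded_linear (\<lambda>(a,b,c,d). vec4 a b c d)"
proof (rule bounded_linear_intro[where K=4])
  fix x y :: "complex \<times> complex \<times> complex \<times> complex"
  show "(case x + y of (a, b, c, d) \<Rightarrow> vec4 a b c d) = (case x of (a, b, c, d) \<Rightarrow> vec4 a b c d) + (case y of (a, b, c, d) \<Rightarrow> vec4 a b c d)"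
    by (cases x; cases y) (simp add: vec4_add)
next
  fix r :: real and x :: "complex \<times> complex \<times> complex \<times> complex"
  show "(case r *\<^sub>R x of (a, b, c, d) \<Rightarrow> vec4 a b c d) = r *\<^sub>R (case x of (a, b, c, d) \<Rightarrow> vec4 a b c d)"
    by (cases x) (simp add: vec_eq_iff forall_4)
next
  fix x :: "complex \<times> complex \<times> complex \<times> complex"
  obtain a b c d where x: "x = (a,b,c,d)" by (cases x) auto
  have "norm a \<le> norm x" "norm b \<le> norm x" "norm c \<le> norm x" "norm d \<le> norm x"
    unfolding x by (metis fst_conv snd_conv norm_fst_le norm_snd_le order_trans)+
  then show "norm (case x of (a, b, c, d) \<Rightarrow> vec4 a b c d) \<le> norm x * 4"
    using norm_vec4[of a b c d] unfolding x by simp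
qed

lemma has_derivative_vec4:
  assumes "(f1 has_derivative f1') (at z within S)" "(f2 has_derivative f2') (at z within S)" "(f3 has_derivative f3') (at z within S)" "(f4 has_derivative f4') (at z within S)"
  shows "((\<lambda>x. vec4 (f1 x) (f2 x) (f3 x) (f4 x)) has_derivative (\<lambda>h. vec4 (f1' h) (f2' h) (f3' h) (f4' h))) (at z within S)"
proof -
  have "((\<lambda>x. (f1 x, f2 x, f3 x, f4 x)) has_derivative (\<lambda>h. (f1' h, f2' h, f3' h, f4' h))) (at z within S)"
    by (intro has_derivative_Pair assms)
  from bounded_linear.has_derivative[OF bounded_linear_vec4 this]
  show ?thesis by simp
qed



abbreviation MM :: "(complex^4) set" where "MM \<equiv> KR - KR_H"

definition yv :: "complex \<Rightarrow> complex \<Rightarrow> complex \<Rightarrow> complex" where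
  "yv x s t = - (x + s^2 + t^3) / x^2"

definition lift :: "complex \<Rightarrow> complex \<Rightarrow> complex \<Rightarrow> complex^4" where
  "lift x s t = vec4 x (yv x s t) s t"

lemma KR_iff: "v \<in> KR \<and> v \<notin> KR_H \<longleftrightarrow> v$1 \<noteq> 0 \<and> v$2 = yv (v$1) (v$3) (v$4)"
proof -
  have "((v$1)^2 * v$2 + v$1 + (v$3)^2 + (v$4)^3 = 0) = (v$2 = yv (v$1) (v$3) (v$4))" if "v$1 \<noteq> 0"
  proof -
    have "(v$2 = yv (v$1) (v$3) (v$4)) = (v$2 * (v$1)^2 = - (v$1 + (v$3)^2 + (v$4)^3))"
      unfolding yv_def using that by (simp add: eq_divide_eq)
    also have "\<dots> = (v$2 * (v$1)^2 + (v$1 + (v$3)^2 + (v$4)^3) = 0)"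
      by (rule eq_neg_iff_add_eq_0)
    finally show ?thesis by (simp add: algebra_simps)
  qed
  then show ?thesis unfolding KR_H_def KR_def by auto
qed

lemma MM_iff: "v \<in> MM \<longleftrightarrow> v$1 \<noteq> 0 \<and> v$2 = yv (v$1) (v$3) (v$4)"
  using KR_iff by simp

lemmas MM_simps = MM_iff KR_iff

lemma lift_in_MM: "x \<noteq> 0 \<Longrightarrow> lift x s t \<in> MM"
  by (simp add: MM_simps lift_def)

lemma lift_coords: "v \<in> MM \<Longrightarrow> lift (v$1) (v$3) (v$4) = v"
  by (simp add: MM_simps lift_def vec4_eq_iff)

lemma MM_x_nz: "v \<in> MM \<Longrightarrow> v$1 \<noteq> 0"
  by (simp add: MM_simps)

definition ty :: "complex^4 \<Rightarrow> complex \<Rightarrow> complex \<Rightarrow> complex \<Rightarrow> complex" where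
  "ty p a b c = - ((2 * p$1 * p$2 + 1) * a + 2 * p$3 * b + 3 * (p$4)^2 * c) / (p$1)^2"

definition tang :: "complex^4 \<Rightarrow> complex \<Rightarrow> complex \<Rightarrow> complex \<Rightarrow> complex^4" where
  "tang p a b c = vec4 a (ty p a b c) b c"

lemma tang_nth [simp]: "tang p a b c $ 1 = a" "tang p a b c $ 2 = ty p a b c" "tang p a b c $ 3 = b" "tang p a b c $ 4 = c"
  by (simp_all add: tang_def)

lemma has_derivative_vec_nth' [derivative_intros]:
  "(f has_derivative f') F \<Longrightarrow> ((\<lambda>v. f v $ i) has_derivative (\<lambda>h. f' h $ i)) F"
  by (rule bounded_linear.has_derivative[OF bounded_linear_vec_nth])

lemma lift_deriv:
  assumes x: "(x has_field_derivative a) (at z within S)" and s: "(s has_field_derivative b) (at z within S)"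
    and t: "(t has_field_derivative c) (at z within S)" and nz: "x z \<noteq> 0"
  shows "((\<lambda>z. lift (x z) (s z) (t z)) has_derivative (\<lambda>h. h *s tang (lift (x z) (s z) (t z)) a b c)) (at z within S)"
proof -
  have y: "((\<lambda>z. yv (x z) (s z) (t z)) has_field_derivative ty (lift (x z) (s z) (t z)) a b c) (at z within S)"
  proof -
    have "((\<lambda>z. - (x z + (s z)^2 + (t z)^3) / (x z)^2) has_field_derivative
      ((- (a + 2 * s z * b + 3 * (t z)^2 * c)) * (x z)^2 - (- (x z + (s z)^2 + (t z)^3)) * (2 * x z * a)) / ((x z)^2)^2) (at z within S)"
      by (rule derivative_eq_intros x s t refl | simp add: nz)+
    moreover have "((- (a + 2 * s z * b + 3 * (t z)^2 * c)) * (x z)^2 - (- (x z + (s z)^2 + (t z)^3)) * (2 * x z * a)) / ((x z)^2)^2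
       = ty (lift (x z) (s z) (t z)) a b c"
      using nz by (simp add: ty_def lift_def yv_def field_simps)
    ultimately show ?thesis unfolding yv_def by simp
  qed
  show ?thesis
    unfolding lift_def
    apply (rule has_derivative_eq_rhs)
     apply (rule has_derivative_vec4[OF x[unfolded has_field_derivative_def] y[unfolded has_field_derivative_def]
        s[unfolded has_field_derivative_def] t[unfolded has_field_derivative_def]])
    apply (simp add: tang_def vec4_smult lift_def mult.commute)
    done
qed

lemma tangent_tang:
  assumes p: "p \<in> MM"
  shows "tangent_vec MM p (tang p a b c)"
proof -
  define e where "e = norm (p$1) / (norm a + 1)"
  have p1: "p$1 \<noteq> 0" using p by (simp add: MM_simps)
  have e: "e > 0" unfolding e_def using p1 by (intro divide_pos_pos) (simp_all add: add_nonneg_pos)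
  define g where "g = (\<lambda>z. lift (p$1 + z * a) (p$3 + z * b) (p$4 + z * c))"
  have nz: "p$1 + z * a \<noteq> 0" if "z \<in> ball 0 e" for z
  proof
    assume "p$1 + z * a = 0"
    then have "norm (p$1) = norm z * norm a" by (metis add_eq_0_iff norm_minus_cancel norm_mult)
    also have "\<dots> \<le> norm z * (norm a + 1)" by (simp add: mult_left_mono)
    also have "\<dots> < e * (norm a + 1)" using that by (intro mult_strict_right_mono) (auto simp: add_nonneg_pos)
    also have "\<dots> = norm (p$1)" unfolding e_def using add_nonneg_pos[OF norm_ge_zero[of a] zero_less_one] by simp
    finally show False by simp
  qed
  have "g ` ball 0 e \<subseteq> MM" unfolding g_def using nz lift_in_MM by auto
  moreover have "g 0 = p" unfolding g_def using lift_coords[OF p] by simp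
  moreover have "(g has_derivative (\<lambda>z. z *s tang p a b c)) (at 0)"
  proof -
    have "(g has_derivative (\<lambda>h. h *s tang (g 0) a b c)) (at 0)"
      unfolding g_def
      by (rule lift_deriv) (auto intro!: derivative_eq_intros simp: p1)
    then show ?thesis using \<open>g 0 = p\<close> by simp
  qed
  ultimately show ?thesis unfolding tangent_vec_def using e by blast
qed

lemma tangent_ty:
  assumes p: "p \<in> MM" and tv: "tangent_vec MM p v"
  shows "v$2 = ty p (v$1) (v$3) (v$4)"
proof -
  obtain g e where e: "e > 0" and gi: "g ` ball 0 e \<subseteq> MM" and g0: "g 0 = p"
    and gd: "(g has_derivative (\<lambda>z. z *s v)) (at 0)"
    using tv unfolding tangent_vec_def by blast
  have gc: "((\<lambda>z. g z $ i) has_field_derivative v$i) (at 0)" for i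
  proof -
    have "(\<lambda>h. h * v$i) = (*) (v$i)" by (auto simp: fun_eq_iff)
    then show ?thesis unfolding has_field_derivative_def
      using has_derivative_vec_nth'[OF gd, of i] by simp
  qed
  define D where "D = (2 * p$1 * p$2 + 1) * v$1 + (p$1)^2 * v$2 + 2 * p$3 * v$3 + 3 * (p$4)^2 * v$4"
  have der: "((\<lambda>z. (g z $ 1)^2 * g z $ 2 + g z $ 1 + (g z $ 3)^2 + (g z $ 4)^3) has_field_derivative D) (at 0)"
    apply (rule derivative_eq_intros gc refl)+
    apply (simp add: D_def g0 algebra_simps power2_eq_square power3_eq_cube)
    done
  have zer: "(g z $ 1)^2 * g z $ 2 + g z $ 1 + (g z $ 3)^2 + (g z $ 4)^3 = 0" if "z \<in> ball 0 e" for z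
  proof -
    have "g z \<in> g ` ball 0 e" using that by blast
    then have "g z \<in> MM" using gi by blast
    then have "g z \<in> KR" by simp
    then show ?thesis by (simp add: KR_def)
  qed
  have "((\<lambda>z. 0) has_field_derivative D) (at 0)"
    by (rule has_field_derivative_transform_within_open[OF der, of "ball 0 e"]) (use e zer in auto)
  then have "D = 0" using DERIV_const DERIV_unique by blast
  moreover have "p$1 \<noteq> 0" using p by (simp add: MM_simps)
  moreover have "v$2 * (p$1)^2 = - ((2 * p$1 * p$2 + 1) * v$1 + 2 * p$3 * v$3 + 3 * (p$4)^2 * v$4)"
    using \<open>D = 0\<close> unfolding D_def by (simp add: algebra_simps eq_neg_iff_add_eq_0)
  ultimately show ?thesis unfolding ty_def by (simp add: eq_divide_eq)
qed

lemma deriv_tangent_unique: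
  assumes d1: "(f has_derivative L1) (at p within MM)" and d2: "(f has_derivative L2) (at p within MM)"
    and tv: "tangent_vec MM p v"
  shows "L1 v = L2 v"
proof -
  obtain g e where e: "e > 0" and gi: "g ` ball 0 e \<subseteq> MM" and g0: "g 0 = p"
    and gd: "(g has_derivative (\<lambda>z. z *s v)) (at 0)"
    using tv unfolding tangent_vec_def by blast
  have "((f \<circ> g) has_derivative (L \<circ> (\<lambda>z. z *s v))) (at 0)"
    if "(f has_derivative L) (at p within MM)" for L
  proof -
    have "((f \<circ> g) has_derivative (L \<circ> (\<lambda>z. z *s v))) (at 0 within ball 0 e)"
      apply (rule diff_chain_within)
       apply (rule has_derivative_at_withinI[OF gd])
      apply (rule has_derivative_subset[OF _ gi])
      using that g0 by simp
    moreover have "at 0 within ball 0 e = at (0::complex)" by (rule at_within_open) (use e in auto)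
    ultimately show ?thesis by (simp only:)
  qed
  from has_derivative_unique[OF this[OF d1] this[OF d2]]
  have "(L1 \<circ> (\<lambda>z. z *s v)) 1 = (L2 \<circ> (\<lambda>z. z *s v)) 1" by (rule arg_cong)
  then show ?thesis by simp
qed



definition ext :: "(complex^4 \<Rightarrow> complex) \<Rightarrow> (complex^4 \<Rightarrow> complex) \<Rightarrow> (complex^4 \<Rightarrow> complex) \<Rightarrow> complex^4 \<Rightarrow> complex^4" where
  "ext \<alpha> \<beta> \<gamma> v = tang v (\<alpha> v) (\<beta> v) (\<gamma> v)"

definition cf :: "(complex^4 \<Rightarrow> complex) \<Rightarrow> (complex^4 \<Rightarrow> complex) \<Rightarrow> (complex^4 \<Rightarrow> complex) \<Rightarrow> complex^4 \<Rightarrow> complex^4" where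
  "cf \<alpha> \<beta> \<gamma> v = (if v \<in> MM then ext \<alpha> \<beta> \<gamma> v else 0)"

definition hasp :: "(complex^4 \<Rightarrow> complex) \<Rightarrow> (complex^4 \<Rightarrow> complex) \<Rightarrow> (complex^4 \<Rightarrow> complex) \<Rightarrow> (complex^4 \<Rightarrow> complex) \<Rightarrow> bool" where
  "hasp \<alpha> ax as aT \<longleftrightarrow> (\<forall>v. v$1 \<noteq> 0 \<longrightarrow> (\<alpha> has_derivative (\<lambda>h. ax v * h$1 + as v * h$3 + aT v * h$4)) (at v))"

definition dty where
  "dty v a b c da db dc h =
     - ((2 * h$1 * v$2 + 2 * v$1 * h$2) * a + (2 * v$1 * v$2 + 1) * da + 2 * h$3 * b + 2 * v$3 * db
        + 6 * v$4 * h$4 * c + 3 * (v$4)^2 * dc) / (v$1)^2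
     + 2 * ((2 * v$1 * v$2 + 1) * a + 2 * v$3 * b + 3 * (v$4)^2 * c) * h$1 / (v$1)^3"

lemma ext_deriv:
  assumes ha: "hasp \<alpha> ax as aT" and hb: "hasp \<beta> bx bs bt" and hc: "hasp \<gamma> cx cs ct" and v: "v$1 \<noteq> 0"
  shows "(ext \<alpha> \<beta> \<gamma> has_derivative (\<lambda>h. vec4 (ax v * h$1 + as v * h$3 + aT v * h$4)
      (dty v (\<alpha> v) (\<beta> v) (\<gamma> v) (ax v * h$1 + as v * h$3 + aT v * h$4) (bx v * h$1 + bs v * h$3 + bt v * h$4)
         (cx v * h$1 + cs v * h$3 + ct v * h$4) h)
      (bx v * h$1 + bs v * h$3 + bt v * h$4) (cx v * h$1 + cs v * h$3 + ct v * h$4))) (at v)"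
proof -
  have da: "(\<alpha> has_derivative (\<lambda>h. ax v * h$1 + as v * h$3 + aT v * h$4)) (at v)"
    using ha v unfolding hasp_def by blast
  have db: "(\<beta> has_derivative (\<lambda>h. bx v * h$1 + bs v * h$3 + bt v * h$4)) (at v)"
    using hb v unfolding hasp_def by blast
  have dc: "(\<gamma> has_derivative (\<lambda>h. cx v * h$1 + cs v * h$3 + ct v * h$4)) (at v)"
    using hc v unfolding hasp_def by blast
  have dy: "((\<lambda>v. ty v (\<alpha> v) (\<beta> v) (\<gamma> v)) has_derivative
     (\<lambda>h. dty v (\<alpha> v) (\<beta> v) (\<gamma> v) (ax v * h$1 + as v * h$3 + aT v * h$4) (bx v * h$1 + bs v * h$3 + bt v * h$4)
         (cx v * h$1 + cs v * h$3 + ct v * h$4) h)) (at v)"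
    unfolding ty_def
    apply (rule has_derivative_eq_rhs)
     apply (rule derivative_eq_intros da db dc has_derivative_ident refl | simp add: v)+
    apply (rule ext)
    apply (simp add: dty_def v field_simps)
    apply algebra
    done
  show ?thesis
    unfolding ext_def tang_def
    by (rule has_derivative_vec4[OF da dy db dc])
qed

lemma cf_in: "v \<in> MM \<Longrightarrow> cf \<alpha> \<beta> \<gamma> v = tang v (\<alpha> v) (\<beta> v) (\<gamma> v)"
  by (simp add: cf_def ext_def)
lemma cf_out: "v \<notin> MM \<Longrightarrow> cf \<alpha> \<beta> \<gamma> v = 0"
  unfolding cf_def by (simp only: if_False)

lemma cf_deriv_within:
  assumes ha: "hasp \<alpha> ax as aT" and hb: "hasp \<beta> bx bs bt" and hc: "hasp \<gamma> cx cs ct" and p: "p \<in> MM"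
  shows "(cf \<alpha> \<beta> \<gamma> has_derivative (\<lambda>h. vec4 (ax p * h$1 + as p * h$3 + aT p * h$4)
      (dty p (\<alpha> p) (\<beta> p) (\<gamma> p) (ax p * h$1 + as p * h$3 + aT p * h$4) (bx p * h$1 + bs p * h$3 + bt p * h$4)
         (cx p * h$1 + cs p * h$3 + ct p * h$4) h)
      (bx p * h$1 + bs p * h$3 + bt p * h$4) (cx p * h$1 + cs p * h$3 + ct p * h$4))) (at p within MM)"
  apply (rule has_derivative_transform_within[where d=1])
     apply (rule has_derivative_at_withinI)
     apply (rule ext_deriv[OF ha hb hc])
  using p by (auto simp: MM_simps cf_def)

lemma dty_id:
  assumes x: "p$1 \<noteq> 0"
  shows "dty p a2 b2 c2 A B C (vec4 a1 (ty p a1 b1 c1) b1 c1) - dty p a1 b1 c1 A' B' C' (vec4 a2 (ty p a2 b2 c2) b2 c2)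
     = ty p (A - A') (B - B') (C - C')"
proof -
  have e: "2 * p$1 * (- N / (p$1)^2) = - 2 * N / p$1" for N using x by (simp add: power2_eq_square field_simps)
  show ?thesis unfolding dty_def ty_def vec4_nth using x
    apply (simp only: e)
    apply (simp add: divide_simps)
    apply (simp add: algebra_simps power2_eq_square power3_eq_cube)
    done
qed

lemma bracket_cf:
  assumes h1: "hasp \<alpha>1 a1x a1s a1t" "hasp \<beta>1 b1x b1s b1t" "hasp \<gamma>1 c1x c1s c1t"
    and h2: "hasp \<alpha>2 a2x a2s a2t" "hasp \<beta>2 b2x b2s b2t" "hasp \<gamma>2 c2x c2s c2t"
  shows "vf_bracket MM (cf \<alpha>1 \<beta>1 \<gamma>1) (cf \<alpha>2 \<beta>2 \<gamma>2) =
    cf (\<lambda>v. (a2x v * \<alpha>1 v + a2s v * \<beta>1 v + a2t v * \<gamma>1 v) - (a1x v * \<alpha>2 v + a1s v * \<beta>2 v + a1t v * \<gamma>2 v))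
       (\<lambda>v. (b2x v * \<alpha>1 v + b2s v * \<beta>1 v + b2t v * \<gamma>1 v) - (b1x v * \<alpha>2 v + b1s v * \<beta>2 v + b1t v * \<gamma>2 v))
       (\<lambda>v. (c2x v * \<alpha>1 v + c2s v * \<beta>1 v + c2t v * \<gamma>1 v) - (c1x v * \<alpha>2 v + c1s v * \<beta>2 v + c1t v * \<gamma>2 v))"
    (is "vf_bracket MM ?V ?W = ?R")
proof
  fix p
  show "vf_bracket MM ?V ?W p = ?R p"
  proof (cases "p \<in> MM")
    case False
    then show ?thesis unfolding vf_bracket_def cf_def by (simp only: if_False)
  next
    case p: True
    note dV = cf_deriv_within[OF h1 p]
    note dW = cf_deriv_within[OF h2 p]
    let ?DV = "SOME L. (?V has_derivative L) (at p within MM)"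
    let ?DW = "SOME L. (?W has_derivative L) (at p within MM)"
    have sV: "(?V has_derivative ?DV) (at p within MM)" by (rule someI[where P="\<lambda>L. (?V has_derivative L) (at p within MM)", OF dV])
    have sW: "(?W has_derivative ?DW) (at p within MM)" by (rule someI[where P="\<lambda>L. (?W has_derivative L) (at p within MM)", OF dW])
    have tV: "tangent_vec MM p (?V p)" unfolding cf_in[OF p] by (rule tangent_tang[OF p])
    have tW: "tangent_vec MM p (?W p)" unfolding cf_in[OF p] by (rule tangent_tang[OF p])
    note eW = deriv_tangent_unique[OF sW dW tV]
    note eV = deriv_tangent_unique[OF sV dV tW]
    have p1: "p$1 \<noteq> 0" using p by (simp add: MM_simps)
    show ?thesis
      unfolding vf_bracket_def using p
      apply (simp only: if_True eW eV)
      apply (simp add: cf_in[OF p] tang_def vec4_diff vec4_eq_iff dty_id p1)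
      done
  qed
qed



lemma lift_nth [simp]: "lift x s t $ 1 = x" "lift x s t $ 3 = s" "lift x s t $ 4 = t"
  by (simp_all add: lift_def)

definition mon :: "int \<Rightarrow> nat \<Rightarrow> nat \<Rightarrow> complex^4 \<Rightarrow> complex" where
  "mon k a b v = (v$1) powi k * (v$3)^a * (v$4)^b"

lemma hasp_mon: "hasp (mon k a b)
   (\<lambda>v. of_int k * (v$1) powi (k - 1) * (v$3)^a * (v$4)^b)
   (\<lambda>v. of_nat a * (v$1) powi k * (v$3)^(a - 1) * (v$4)^b)
   (\<lambda>v. of_nat b * (v$1) powi k * (v$3)^a * (v$4)^(b - 1))"
  unfolding hasp_def mon_def
  apply (intro allI impI)
  apply (rule has_derivative_eq_rhs)
   apply (rule derivative_eq_intros has_derivative_ident refl | assumption)+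
  apply (simp add: fun_eq_iff algebra_simps)
  done

lemma hasp_zero: "hasp (\<lambda>v. 0) (\<lambda>v. 0) (\<lambda>v. 0) (\<lambda>v. 0)"
  unfolding hasp_def by (auto intro!: derivative_eq_intros)

lemma complex_linear_ext_deriv:
  "complex_linear (\<lambda>h. vec4 (ax * h$1 + as * h$3 + aT * h$4)
      (dty v a b c (ax * h$1 + as * h$3 + aT * h$4) (bx * h$1 + bs * h$3 + bt * h$4)
         (cx * h$1 + cs * h$3 + ct * h$4) h)
      (bx * h$1 + bs * h$3 + bt * h$4) (cx * h$1 + cs * h$3 + ct * h$4))"
  unfolding complex_linear_def vec4_smult
  by (simp add: dty_def field_simps)

lemma holo_vf_cf:
  assumes ha: "hasp \<alpha> ax as aT" and hb: "hasp \<beta> bx bs bt" and hc: "hasp \<gamma> cx cs ct"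
  shows "holo_vf MM (cf \<alpha> \<beta> \<gamma>)"
  unfolding holo_vf_def
proof (intro conjI ballI allI impI)
  show "holo_on_set (cf \<alpha> \<beta> \<gamma>) MM"
    unfolding holo_on_set_def
  proof
    fix p assume p: "p \<in> MM"
    have "open {v::complex^4. v$1 \<noteq> 0}"
      by (rule open_Collect_neq) (auto intro: continuous_intros)
    moreover have "p \<in> {v. v$1 \<noteq> 0}" using p by (simp add: MM_simps)
    moreover have "holo_on (ext \<alpha> \<beta> \<gamma>) {v. v$1 \<noteq> 0}"
      unfolding holo_on_def using ext_deriv[OF ha hb hc] complex_linear_ext_deriv by blast
    moreover have "\<forall>q\<in>{v. v$1 \<noteq> 0} \<inter> MM. ext \<alpha> \<beta> \<gamma> q = cf \<alpha> \<beta> \<gamma> q"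
      by (auto simp: cf_def)
    ultimately show "\<exists>U g. open U \<and> p \<in> U \<and> holo_on g U \<and> (\<forall>q\<in>U \<inter> MM. g q = cf \<alpha> \<beta> \<gamma> q)"
      by blast
  qed
next
  fix p assume p: "p \<in> MM"
  show "tangent_vec MM p (cf \<alpha> \<beta> \<gamma> p)" unfolding cf_in[OF p] by (rule tangent_tang[OF p])
next
  fix p assume "p \<notin> MM"
  then show "cf \<alpha> \<beta> \<gamma> p = 0" by (rule cf_out)
qed

lemma complete_cf:
  assumes ha: "hasp \<alpha> ax as aT" and hb: "hasp \<beta> bx bs bt" and hc: "hasp \<gamma> cx cs ct"
    and F0: "\<And>p. p \<in> MM \<Longrightarrow> FX 0 p = p$1 \<and> FS 0 p = p$3 \<and> FT 0 p = p$4"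
    and Fnz: "\<And>p t. p \<in> MM \<Longrightarrow> FX t p \<noteq> 0"
    and dX: "\<And>p t. p \<in> MM \<Longrightarrow> ((\<lambda>t. FX t p) has_field_derivative \<alpha> (lift (FX t p) (FS t p) (FT t p))) (at t)"
    and dS: "\<And>p t. p \<in> MM \<Longrightarrow> ((\<lambda>t. FS t p) has_field_derivative \<beta> (lift (FX t p) (FS t p) (FT t p))) (at t)"
    and dT: "\<And>p t. p \<in> MM \<Longrightarrow> ((\<lambda>t. FT t p) has_field_derivative \<gamma> (lift (FX t p) (FS t p) (FT t p))) (at t)"
  shows "complete_vf MM (cf \<alpha> \<beta> \<gamma>)"
  unfolding complete_vf_def
proof (intro conjI holo_vf_cf[OF ha hb hc] exI[where x="\<lambda>t p. lift (FX t p) (FS t p) (FT t p)"] ballI allI)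
  fix p assume p: "p \<in> MM"
  show "lift (FX 0 p) (FS 0 p) (FT 0 p) = p" using F0[OF p] lift_coords[OF p] by simp
  fix t
  show "lift (FX t p) (FS t p) (FT t p) \<in> MM" by (rule lift_in_MM[OF Fnz[OF p]])
  show "((\<lambda>s. lift (FX s p) (FS s p) (FT s p)) has_derivative
          (\<lambda>s. s *s cf \<alpha> \<beta> \<gamma> (lift (FX t p) (FS t p) (FT t p)))) (at t)"
    using lift_deriv[OF dX[OF p] dS[OF p] dT[OF p] Fnz[OF p]]
    by (simp add: cf_in[OF lift_in_MM[OF Fnz[OF p]]])
qed



abbreviation CL where "CL \<equiv> complete_lie_alg MM"

lemma cf_cong: "(\<And>v. v \<in> MM \<Longrightarrow> \<alpha> v = \<alpha>' v \<and> \<beta> v = \<beta>' v \<and> \<gamma> v = \<gamma>' v) \<Longrightarrow> cf \<alpha> \<beta> \<gamma> = cf \<alpha>' \<beta>' \<gamma>'"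
  by (auto simp: fun_eq_iff cf_def ext_def)

lemma ty_lin: "p$1 \<noteq> 0 \<Longrightarrow> ty p (a1 + c * a2) (b1 + c * b2) (g1 + c * g2) = ty p a1 b1 g1 + c * ty p a2 b2 g2"
  unfolding ty_def
  by (simp add: field_simps)

lemma cf_lin: "cf \<alpha>1 \<beta>1 \<gamma>1 p + c *s cf \<alpha>2 \<beta>2 \<gamma>2 p = cf (\<lambda>v. \<alpha>1 v + c * \<alpha>2 v) (\<lambda>v. \<beta>1 v + c * \<beta>2 v) (\<lambda>v. \<gamma>1 v + c * \<gamma>2 v) p"
proof (cases "p \<in> MM")
  case True
  have "p$1 \<noteq> 0" using True by (simp add: MM_simps)
  then show ?thesis using True
    by (simp add: cf_in tang_def vec4_smult vec4_add ty_lin)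
next
  case False
  then show ?thesis by (simp add: cf_out)
qed

lemma CL_lin: "cf \<alpha>1 \<beta>1 \<gamma>1 \<in> CL \<Longrightarrow> cf \<alpha>2 \<beta>2 \<gamma>2 \<in> CL \<Longrightarrow>
   cf (\<lambda>v. \<alpha>1 v + c * \<alpha>2 v) (\<lambda>v. \<beta>1 v + c * \<beta>2 v) (\<lambda>v. \<gamma>1 v + c * \<gamma>2 v) \<in> CL"
proof -
  assume a: "cf \<alpha>1 \<beta>1 \<gamma>1 \<in> CL" "cf \<alpha>2 \<beta>2 \<gamma>2 \<in> CL"
  have "(\<lambda>p. cf \<alpha>1 \<beta>1 \<gamma>1 p + c *s cf \<alpha>2 \<beta>2 \<gamma>2 p) \<in> CL"
    by (intro complete_lie_alg.add complete_lie_alg.smult a)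
  then show ?thesis unfolding cf_lin .
qed

lemma CL_smult: "cf \<alpha> \<beta> \<gamma> \<in> CL \<Longrightarrow> cf (\<lambda>v. c * \<alpha> v) (\<lambda>v. c * \<beta> v) (\<lambda>v. c * \<gamma> v) \<in> CL"
proof -
  assume a: "cf \<alpha> \<beta> \<gamma> \<in> CL"
  have z: "cf (\<lambda>v. 0) (\<lambda>v. 0) (\<lambda>v. 0) = (\<lambda>p. 0)"
    by (auto simp: fun_eq_iff cf_def ext_def tang_def ty_def vec4_zero)
  have "cf (\<lambda>v. 0) (\<lambda>v. 0) (\<lambda>v. 0) \<in> CL" unfolding z by (rule complete_lie_alg.zero)
  from CL_lin[OF this a, of c] show ?thesis by simp
qed

lemma CL_zero: "cf (\<lambda>v. 0) (\<lambda>v. 0) (\<lambda>v. 0) \<in> CL"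
proof -
  have z: "cf (\<lambda>v. 0) (\<lambda>v. 0) (\<lambda>v. 0) = (\<lambda>p. 0)"
    by (auto simp: fun_eq_iff cf_def ext_def tang_def ty_def vec4_zero)
  show ?thesis unfolding z by (rule complete_lie_alg.zero)
qed

lemma CL_bracket:
  assumes h1: "hasp \<alpha>1 a1x a1s a1t" "hasp \<beta>1 b1x b1s b1t" "hasp \<gamma>1 c1x c1s c1t"
    and h2: "hasp \<alpha>2 a2x a2s a2t" "hasp \<beta>2 b2x b2s b2t" "hasp \<gamma>2 c2x c2s c2t"
    and m: "cf \<alpha>1 \<beta>1 \<gamma>1 \<in> CL" "cf \<alpha>2 \<beta>2 \<gamma>2 \<in> CL"
  shows "cf (\<lambda>v. (a2x v * \<alpha>1 v + a2s v * \<beta>1 v + a2t v * \<gamma>1 v) - (a1x v * \<alpha>2 v + a1s v * \<beta>2 v + a1t v * \<gamma>2 v))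
       (\<lambda>v. (b2x v * \<alpha>1 v + b2s v * \<beta>1 v + b2t v * \<gamma>1 v) - (b1x v * \<alpha>2 v + b1s v * \<beta>2 v + b1t v * \<gamma>2 v))
       (\<lambda>v. (c2x v * \<alpha>1 v + c2s v * \<beta>1 v + c2t v * \<gamma>1 v) - (c1x v * \<alpha>2 v + c1s v * \<beta>2 v + c1t v * \<gamma>2 v)) \<in> CL"
  using complete_lie_alg.bracket[OF m] unfolding bracket_cf[OF h1 h2] .

abbreviation "Z \<equiv> (\<lambda>v::complex^4. 0::complex)"

lemma gen_s0: "cf Z (mon k 0 b) Z \<in> CL"
  apply (rule complete_lie_alg.gen)
  apply (rule complete_cf[OF hasp_zero hasp_mon hasp_zero,
     where FX="\<lambda>t p. p$1" and FS="\<lambda>t p. p$3 + t * mon k 0 b p" and FT="\<lambda>t p. p$4"])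
  by (auto simp: MM_simps mon_def intro!: derivative_eq_intros)

lemma gen_t0: "cf Z Z (mon k a 0) \<in> CL"
  apply (rule complete_lie_alg.gen)
  apply (rule complete_cf[OF hasp_zero hasp_zero hasp_mon,
     where FX="\<lambda>t p. p$1" and FS="\<lambda>t p. p$3" and FT="\<lambda>t p. p$4 + t * mon k a 0 p"])
  by (auto simp: MM_simps mon_def intro!: derivative_eq_intros)

lemma gen_s1: "cf Z (mon k 1 b) Z \<in> CL"
  apply (rule complete_lie_alg.gen)
  apply (rule complete_cf[OF hasp_zero hasp_mon hasp_zero,
     where FX="\<lambda>t p. p$1" and FS="\<lambda>t p. p$3 * exp (t * mon k 0 b p)" and FT="\<lambda>t p. p$4"])
  by (auto simp: MM_simps mon_def intro!: derivative_eq_intros)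

lemma gen_t1: "cf Z Z (mon k a 1) \<in> CL"
  apply (rule complete_lie_alg.gen)
  apply (rule complete_cf[OF hasp_zero hasp_zero hasp_mon,
     where FX="\<lambda>t p. p$1" and FS="\<lambda>t p. p$3" and FT="\<lambda>t p. p$4 * exp (t * mon k a 0 p)"])
  by (auto simp: MM_simps mon_def intro!: derivative_eq_intros)

lemma gen_x1: "cf (mon 1 a b) Z Z \<in> CL"
  apply (rule complete_lie_alg.gen)
  apply (rule complete_cf[OF hasp_mon hasp_zero hasp_zero,
     where FX="\<lambda>t p. p$1 * exp (t * mon 0 a b p)" and FS="\<lambda>t p. p$3" and FT="\<lambda>t p. p$4"])
  by (auto simp: MM_simps mon_def intro!: derivative_eq_intros)

lemma CL_cong: "cf \<alpha> \<beta> \<gamma> \<in> CL \<Longrightarrow> (\<And>v. v \<in> MM \<Longrightarrow> \<alpha> v = \<alpha>' v \<and> \<beta> v = \<beta>' v \<and> \<gamma> v = \<gamma>' v) \<Longrightarrow> cf \<alpha>' \<beta>' \<gamma>' \<in> CL"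
  using cf_cong by metis

lemma powi_m1: "(x::complex) \<noteq> 0 \<Longrightarrow> x powi (k - 1) * x = x powi k"
  by (simp add: power_int_diff)

lemma mono_s_a0: "cf Z (mon k a 0) Z \<in> CL"
proof (cases a)
  case 0
  then show ?thesis using gen_s0[of k 0] by simp
next
  case (Suc a')
  note br = CL_bracket[OF hasp_zero hasp_zero hasp_mon hasp_zero hasp_mon hasp_zero gen_t0[of k a] gen_s0[of 0 1]]
  show ?thesis
    apply (rule CL_cong[OF CL_lin[OF br gen_t1[of k a'], where c="of_nat a"]])
    using Suc by (auto simp: mon_def)
qed

lemma mono_s: "cf Z (mon k a b) Z \<in> CL"
proof (cases "a = 1")
  case True
  then show ?thesis using gen_s1 by simp
next
  case False
  note br = CL_bracket[OF hasp_zero hasp_mon hasp_zero hasp_zero hasp_mon hasp_zero mono_s_a0[of k a] gen_s1[of 0 b]]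
  have na: "1 - of_nat a \<noteq> (0::complex)" using False by (metis eq_iff_diff_eq_0 of_nat_eq_1_iff)
  show ?thesis
    apply (rule CL_cong[OF CL_smult[OF br, where c="1 / (1 - of_nat a)"]])
    using na by (cases a) (auto simp: mon_def field_simps)
qed

lemma mono_t_0b: "cf Z Z (mon k 0 b) \<in> CL"
proof (cases b)
  case 0
  then show ?thesis using gen_t0[of k 0] by simp
next
  case (Suc b')
  note br = CL_bracket[OF hasp_zero hasp_mon hasp_zero hasp_zero hasp_zero hasp_mon gen_s0[of k b] gen_t0[of 0 1]]
  show ?thesis
    apply (rule CL_cong[OF CL_lin[OF br gen_s1[of k b'], where c="of_nat b"]])
    using Suc by (auto simp: mon_def)
qed

lemma mono_t: "cf Z Z (mon k a b) \<in> CL"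
proof (cases "b = 1")
  case True
  then show ?thesis using gen_t1 by simp
next
  case False
  note br = CL_bracket[OF hasp_zero hasp_zero hasp_mon hasp_zero hasp_zero hasp_mon mono_t_0b[of k b] gen_t1[of 0 a]]
  have nb: "1 - of_nat b \<noteq> (0::complex)" using False by (metis eq_iff_diff_eq_0 of_nat_eq_1_iff)
  show ?thesis
    apply (rule CL_cong[OF CL_smult[OF br, where c="1 / (1 - of_nat b)"]])
    using nb by (cases b) (auto simp: mon_def field_simps)
qed

lemma mono_x: "cf (mon k a b) Z Z \<in> CL"
proof -
  note br = CL_bracket[OF hasp_zero hasp_mon hasp_zero hasp_mon hasp_zero hasp_zero gen_s0[of "k - 1" 0] gen_x1[of "a + 1" b]]
  note c1 = CL_lin[OF br mono_s[of "k - 1" "a + 1" b], where c="of_int (k - 1)"]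
  show ?thesis
    apply (rule CL_cong[OF CL_smult[OF c1, where c="1 / (of_nat a + 1)"]])
    subgoal for v
    proof -
      assume v: "v \<in> MM"
      then have x: "v$1 \<noteq> 0" by (simp add: MM_simps)
      have e1: "v$1 powi k = v$1 powi (k - 1) * v$1" using powi_m1[OF x, of k] by simp
      have e2: "v$1 powi (k - 1) = v$1 powi (k - 2) * v$1" using powi_m1[OF x, of "k - 1"] by simp
      have na: "(of_nat a + 1 :: complex) \<noteq> 0" by (metis of_nat_Suc of_nat_eq_0_iff add.commute nat.distinct(1))
      show ?thesis using x na unfolding mon_def
        apply simp
        unfolding e1 e2
        apply (simp add: field_simps)
        done
    qed
    done
qed



definition G :: "complex \<Rightarrow> complex" where "G q = 1 / (1 - q)"

lemma circ_nz: "\<rho> > 0 \<Longrightarrow> circlepath 0 \<rho> u \<noteq> 0"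
  by (simp add: circlepath)

lemma norm_circ: "\<rho> > 0 \<Longrightarrow> norm (circlepath 0 \<rho> u) = \<rho>"
  by (simp add: circlepath norm_mult norm_exp_eq_Re)

lemma vd_circ: "vector_derivative (circlepath 0 \<rho>) (at u) = 2 * of_real pi * \<i> * circlepath 0 \<rho> u"
  unfolding vector_derivative_circlepath by (simp add: circlepath)

lemma contour_circ_integral:
  "contour_integral (circlepath 0 \<rho>) (\<lambda>\<zeta>. h \<zeta> / (\<zeta> - z)) =
     2 * of_real pi * \<i> * integral {0..1} (\<lambda>u. h (circlepath 0 \<rho> u) * (circlepath 0 \<rho> u / (circlepath 0 \<rho> u - z)))"
  unfolding contour_integral_integral vd_circ
  by (simp add: field_simps flip: integral_mult_right)

lemma kappa_G: "\<zeta> \<noteq> 0 \<Longrightarrow> \<zeta> / (\<zeta> - z) = G (z / \<zeta>)"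
  unfolding G_def by (simp add: field_simps)

lemma kappa_G_in: "x \<noteq> 0 \<Longrightarrow> \<zeta> \<noteq> x \<Longrightarrow> (\<zeta> / x) * G (\<zeta> / x) = - (\<zeta> / (\<zeta> - x))"
proof -
  assume a: "x \<noteq> 0" "\<zeta> \<noteq> x"
  then have "x - \<zeta> \<noteq> 0" "\<zeta> - x \<noteq> 0" by auto
  with a show ?thesis unfolding G_def by (simp add: field_simps)
qed

lemma cauchy_disc:
  assumes h: "h holomorphic_on UNIV" and z: "norm z < \<rho>"
  shows "integral {0..1} (\<lambda>u. h (circlepath 0 \<rho> u) * G (z / circlepath 0 \<rho> u)) = h z"
proof -
  have \<rho>: "\<rho> > 0" using z norm_ge_zero by (meson le_less_trans)
  have "((\<lambda>\<zeta>. h \<zeta> / (\<zeta> - z)) has_contour_integral (2 * of_real pi * \<i> * h z)) (circlepath 0 \<rho>)"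
    by (rule Cauchy_integral_circlepath)
       (auto intro: holomorphic_on_imp_continuous_on holomorphic_on_subset[OF h] simp: z)
  then have "contour_integral (circlepath 0 \<rho>) (\<lambda>\<zeta>. h \<zeta> / (\<zeta> - z)) = 2 * of_real pi * \<i> * h z"
    by (rule contour_integral_unique)
  then have "integral {0..1} (\<lambda>u. h (circlepath 0 \<rho> u) * (circlepath 0 \<rho> u / (circlepath 0 \<rho> u - z))) = h z"
    unfolding contour_circ_integral by simp
  then show ?thesis using kappa_G[OF circ_nz[OF \<rho>]] by simp
qed

lemma cont_circ: "continuous_on S (circlepath 0 \<rho>)"
  unfolding circlepath by (intro continuous_intros)

lemma circ_ne: "\<rho> > 0 \<Longrightarrow> norm x \<noteq> \<rho> \<Longrightarrow> circlepath 0 \<rho> u - x \<noteq> 0"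
  using norm_circ[of \<rho> u] by auto

lemma cont_kappa: "\<rho> > 0 \<Longrightarrow> norm x \<noteq> \<rho> \<Longrightarrow>
   continuous_on S (\<lambda>u. circlepath 0 \<rho> u / (circlepath 0 \<rho> u - x))"
proof -
  have "circlepath 0 \<rho> u \<noteq> x" if "\<rho> > 0" "norm x \<noteq> \<rho>" for u
    using norm_circ[OF that(1), of u] that(2) by auto
  then show "\<rho> > 0 \<Longrightarrow> norm x \<noteq> \<rho> \<Longrightarrow> ?thesis"
    by (intro continuous_intros cont_circ) auto
qed

lemma cont_h_circ: "continuous_on (-{0}) h \<Longrightarrow> \<rho> > 0 \<Longrightarrow> continuous_on S (\<lambda>u. h (circlepath 0 \<rho> u))"
  by (rule continuous_on_compose2[OF _ cont_circ]) (auto simp: circ_nz)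

lemma kappa_int_out:
  assumes "\<rho> > 0" "\<rho> < norm x"
  shows "integral {0..1} (\<lambda>u. circlepath 0 \<rho> u / (circlepath 0 \<rho> u - x)) = 0"
proof -
  have "((\<lambda>\<zeta>. 1 / (\<zeta> - x)) has_contour_integral 0) (circlepath 0 \<rho>)"
  proof (rule Cauchy_theorem_convex_simple[where S="ball 0 (norm x)"])
    show "(\<lambda>\<zeta>. 1 / (\<zeta> - x)) holomorphic_on ball 0 (norm x)"
      by (intro holomorphic_intros) auto
    show "path_image (circlepath 0 \<rho>) \<subseteq> ball 0 (norm x)"
      using assms by (auto simp: path_image_circlepath)
  qed auto
  then have "contour_integral (circlepath 0 \<rho>) (\<lambda>\<zeta>. 1 / (\<zeta> - x)) = 0" by (rule contour_integral_unique)
  then show ?thesis unfolding contour_circ_integral by simp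
qed

lemma kappa_int_in:
  assumes "norm x < \<rho>"
  shows "integral {0..1} (\<lambda>u. circlepath 0 \<rho> u / (circlepath 0 \<rho> u - x)) = 1"
proof -
  have \<rho>: "\<rho> > 0" using assms norm_ge_zero by (meson le_less_trans)
  have "integral {0..1} (\<lambda>u. (\<lambda>_. 1) (circlepath 0 \<rho> u) * G (x / circlepath 0 \<rho> u)) = 1"
    by (rule cauchy_disc) (auto simp: assms)
  then show ?thesis using kappa_G[OF circ_nz[OF \<rho>]] by simp
qed

lemma cauchy_annulus:
  assumes h: "h holomorphic_on -{0}" and r: "0 < \<rho>1" "\<rho>1 < norm x" "norm x < \<rho>2"
  shows "integral {0..1} (\<lambda>u. h (circlepath 0 \<rho>2 u) * G (x / circlepath 0 \<rho>2 u)
     + h (circlepath 0 \<rho>1 u) * (circlepath 0 \<rho>1 u / x) * G (circlepath 0 \<rho>1 u / x)) = h x"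
proof -
  define c1 where "c1 = circlepath 0 \<rho>1"
  define c2 where "c2 = circlepath 0 \<rho>2"
  have r2: "\<rho>2 > 0" using r by linarith
  have x0: "x \<noteq> 0" using r by auto
  have hc: "continuous_on (-{0}) h" using h holomorphic_on_imp_continuous_on by blast
  define g where "g = (\<lambda>z. if z = x then deriv h x else (h z - h x) / (z - x))"
  have gh: "g holomorphic_on -{0}" unfolding g_def by (rule pole_lemma_open[OF h]) auto
  have hom: "homotopic_loops (-{0}) c1 c2"
    unfolding c1_def c2_def
  proof (rule homotopic_loops_linear)
    fix t :: real assume "t \<in> {0..1}"
    show "closed_segment (circlepath 0 \<rho>1 t) (circlepath 0 \<rho>2 t) \<subseteq> - {0}"
    proof
      fix z assume "z \<in> closed_segment (circlepath 0 \<rho>1 t) (circlepath 0 \<rho>2 t)"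
      then obtain u where u: "0 \<le> u" "u \<le> 1" and z: "z = (1 - u) *\<^sub>R circlepath 0 \<rho>1 t + u *\<^sub>R circlepath 0 \<rho>2 t"
        unfolding closed_segment_def by auto
      have zeq: "z = of_real ((1 - u) * \<rho>1 + u * \<rho>2) * exp (2 * of_real pi * \<i> * of_real t)"
        unfolding z circlepath by (simp add: scaleR_conv_of_real algebra_simps)
      have pos: "(1 - u) * \<rho>1 + u * \<rho>2 > 0"
        using u r r2 by (smt (verit) mult_nonneg_nonneg mult_pos_pos)
      have "z \<noteq> 0" unfolding zeq using pos
        by (metis exp_not_eq_zero mult_eq_0_iff of_real_eq_0_iff less_irrefl)
      then show "z \<in> - {0}" by auto
    qed
  qed (auto intro: valid_path_imp_path)
  have "contour_integral c1 g = contour_integral c2 g"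
    by (rule Cauchy_theorem_homotopic_loops[OF hom _ gh]) (auto simp: c1_def c2_def)
  moreover have "contour_integral c g = contour_integral c (\<lambda>z. (h z - h x) / (z - x))"
    if "c = circlepath 0 \<rho>" "\<rho> > 0" "norm x \<noteq> \<rho>" for c \<rho>
    by (rule contour_integral_cong) (use that in \<open>auto simp: g_def path_image_circlepath\<close>)
  ultimately have eq: "contour_integral c1 (\<lambda>z. (h z - h x) / (z - x)) = contour_integral c2 (\<lambda>z. (h z - h x) / (z - x))"
    unfolding c1_def c2_def using r r2 by auto
  have int_split: "integral {0..1} (\<lambda>u. (h (circlepath 0 \<rho> u) - h x) * (circlepath 0 \<rho> u / (circlepath 0 \<rho> u - x)))
      = integral {0..1} (\<lambda>u. h (circlepath 0 \<rho> u) * (circlepath 0 \<rho> u / (circlepath 0 \<rho> u - x)))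
        - h x * integral {0..1} (\<lambda>u. circlepath 0 \<rho> u / (circlepath 0 \<rho> u - x))"
    if "\<rho> > 0" "norm x \<noteq> \<rho>" for \<rho>
  proof -
    have i1: "(\<lambda>u. h (circlepath 0 \<rho> u) * (circlepath 0 \<rho> u / (circlepath 0 \<rho> u - x))) integrable_on {0..1}"
      by (intro integrable_continuous_interval continuous_intros cont_h_circ[OF hc] cont_kappa that)
    have i2: "(\<lambda>u. h x * (circlepath 0 \<rho> u / (circlepath 0 \<rho> u - x))) integrable_on {0..1}"
      by (intro integrable_continuous_interval continuous_intros cont_kappa that)
    have "integral {0..1} (\<lambda>u. (h (circlepath 0 \<rho> u) - h x) * (circlepath 0 \<rho> u / (circlepath 0 \<rho> u - x)))
      = integral {0..1} (\<lambda>u. h (circlepath 0 \<rho> u) * (circlepath 0 \<rho> u / (circlepath 0 \<rho> u - x))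
          - h x * (circlepath 0 \<rho> u / (circlepath 0 \<rho> u - x)))"
      by (rule integral_cong) (simp add: left_diff_distrib diff_divide_distrib)
    also have "\<dots> = integral {0..1} (\<lambda>u. h (circlepath 0 \<rho> u) * (circlepath 0 \<rho> u / (circlepath 0 \<rho> u - x)))
        - integral {0..1} (\<lambda>u. h x * (circlepath 0 \<rho> u / (circlepath 0 \<rho> u - x)))"
      by (rule integral_diff[OF i1 i2])
    finally show ?thesis by (simp only: integral_mult_right)
  qed
  have A: "integral {0..1} (\<lambda>u. h (c2 u) * (c2 u / (c2 u - x))) - h x
      = integral {0..1} (\<lambda>u. h (c1 u) * (c1 u / (c1 u - x)))"
    using eq unfolding c1_def c2_def contour_circ_integral
    using int_split[of \<rho>1] int_split[of \<rho>2] r r2 kappa_int_in[of x \<rho>2] kappa_int_out[of \<rho>1 x]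
    by simp
  have B: "integral {0..1} (\<lambda>u. h (c2 u) * G (x / c2 u) + h (c1 u) * (c1 u / x) * G (c1 u / x))
     = integral {0..1} (\<lambda>u. h (c2 u) * (c2 u / (c2 u - x))) - integral {0..1} (\<lambda>u. h (c1 u) * (c1 u / (c1 u - x)))"
  proof -
    have i1: "(\<lambda>u. h (c2 u) * (c2 u / (c2 u - x))) integrable_on {0..1}"
      unfolding c2_def using r r2
      by (intro integrable_continuous_interval continuous_intros cont_h_circ[OF hc] cont_kappa) auto
    have i2: "(\<lambda>u. h (c1 u) * (c1 u / (c1 u - x))) integrable_on {0..1}"
      unfolding c1_def using r
      by (intro integrable_continuous_interval continuous_intros cont_h_circ[OF hc] cont_kappa) auto
    have "integral {0..1} (\<lambda>u. h (c2 u) * G (x / c2 u) + h (c1 u) * (c1 u / x) * G (c1 u / x))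
       = integral {0..1} (\<lambda>u. h (c2 u) * (c2 u / (c2 u - x)) - h (c1 u) * (c1 u / (c1 u - x)))"
    proof (rule integral_cong)
      fix u
      have n1: "c1 u \<noteq> 0" "c1 u - x \<noteq> 0" "c1 u \<noteq> x" unfolding c1_def using circ_nz circ_ne r by auto
      have n2: "c2 u \<noteq> 0" "c2 u \<noteq> x" unfolding c2_def using circ_nz r2 norm_circ[OF r2, of u] r by auto
      show "h (c2 u) * G (x / c2 u) + h (c1 u) * (c1 u / x) * G (c1 u / x) = h (c2 u) * (c2 u / (c2 u - x)) - h (c1 u) * (c1 u / (c1 u - x))"
      proof -
        have e2: "G (x / c2 u) = c2 u / (c2 u - x)" using kappa_G[OF n2(1)] by simp
        have e1: "(c1 u / x) * G (c1 u / x) = - (c1 u / (c1 u - x))" using kappa_G_in[OF x0 n1(3)] .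
        show ?thesis by (simp only: e2 mult.assoc e1) simp
      qed
    qed
    also have "\<dots> = integral {0..1} (\<lambda>u. h (c2 u) * (c2 u / (c2 u - x))) - integral {0..1} (\<lambda>u. h (c1 u) * (c1 u / (c1 u - x)))"
      by (rule integral_diff[OF i1 i2])
    finally show ?thesis .
  qed
  show ?thesis unfolding c1_def[symmetric] c2_def[symmetric] B A[symmetric] by simp
qed



definition GN :: "nat \<Rightarrow> complex \<Rightarrow> complex" where "GN N q = (\<Sum>n<N. q^n)"

lemma geo_bounds:
  assumes q: "norm q \<le> 1/2"
  shows "norm (G q) \<le> 2" "norm (GN N q) \<le> 2" "norm (G q - GN N q) \<le> 2 * (1/2)^N"
proof -
  have q1: "q \<noteq> 1" using q by auto
  have d: "norm (1 - q) \<ge> 1/2"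
    using norm_triangle_ineq2[of 1 q] q by simp
  have dpos: "norm (1 - q) > 0" using d by linarith
  show "norm (G q) \<le> 2" unfolding G_def using d dpos by (simp add: norm_divide field_simps)
  have "norm (GN N q) \<le> (\<Sum>n<N. norm q ^ n)" unfolding GN_def
    by (rule order_trans[OF norm_sum]) (simp add: norm_power)
  also have "\<dots> \<le> (\<Sum>n<N. (1/2::real) ^ n)"
    by (intro sum_mono power_mono q) auto
  also have "\<dots> \<le> 2"
  proof -
    have "(\<Sum>n<N. (1/2::real) ^ n) = (1 - (1/2)^N) / (1 - 1/2)" by (simp add: sum_gp_strict)
    also have "\<dots> \<le> 2" by simp
    finally show ?thesis .
  qed
  finally show "norm (GN N q) \<le> 2" .
  have "G q - GN N q = q^N / (1 - q)"
    unfolding G_def GN_def sum_gp_strict using q1 by (simp add: field_simps)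
  then have "norm (G q - GN N q) = norm q ^ N / norm (1 - q)" by (simp add: norm_divide norm_power)
  also have "\<dots> \<le> (1/2)^N / (1/2)"
    by (intro frac_le power_mono q d) auto
  finally show "norm (G q - GN N q) \<le> 2 * (1/2)^N" by simp
qed

lemma prod3_bound:
  fixes X X' c c' d d' :: complex
  assumes "norm (X - X') \<le> E1" "norm c \<le> 2" "norm d \<le> 2" "norm X' \<le> K"
    "norm (c - c') \<le> E2" "norm c' \<le> 2" "norm (d - d') \<le> E3"
  shows "norm (X * c * d - X' * c' * d') \<le> 4 * E1 + 2 * K * E2 + 2 * K * E3"
proof -
  have nn: "0 \<le> E1" "0 \<le> E2" "0 \<le> E3" "0 \<le> K"
    using assms norm_ge_zero by (meson order_trans)+
  have "X * c * d - X' * c' * d' = (X - X') * c * d + X' * (c - c') * d + X' * c' * (d - d')"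
    by (simp add: algebra_simps)
  then have "norm (X * c * d - X' * c' * d') \<le> norm (X - X') * norm c * norm d + norm X' * norm (c - c') * norm d + norm X' * norm c' * norm (d - d')"
  proof -
    have "norm ((X - X') * c * d + X' * (c - c') * d + X' * c' * (d - d')) \<le>
        norm ((X - X') * c * d + X' * (c - c') * d) + norm (X' * c' * (d - d'))" by (rule norm_triangle_ineq)
    also have "\<dots> \<le> norm ((X - X') * c * d) + norm (X' * (c - c') * d) + norm (X' * c' * (d - d'))"
      by (simp add: norm_triangle_ineq)
    finally show ?thesis using \<open>X * c * d - X' * c' * d' = _\<close> by (simp add: norm_mult)
  qed
  also have "\<dots> \<le> E1 * 2 * 2 + K * E2 * 2 + K * 2 * E3"
    by (intro add_mono mult_mono assms) (simp_all add: nn)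
  finally show ?thesis by (simp add: algebra_simps)
qed

definition LP :: "nat \<Rightarrow> (nat \<Rightarrow> nat \<Rightarrow> nat \<Rightarrow> complex) \<Rightarrow> (nat \<Rightarrow> nat \<Rightarrow> nat \<Rightarrow> complex) \<Rightarrow> complex \<Rightarrow> complex \<Rightarrow> complex \<Rightarrow> complex" where
  "LP N A B x s t = (\<Sum>n<N. \<Sum>m<N. \<Sum>l<N. (A n m l * x^n + B n m l * x powi (- (int n + 1))) * s^m * t^l)"

lemma one_minus_nz: "norm (q::complex) \<le> 1/2 \<Longrightarrow> 1 - q \<noteq> 0"
  by auto

abbreviation "DD \<equiv> cbox (0::real, 0::real, 0::real) (1, 1, 1)"

lemma content_DD: "Henstock_Kurzweil_Integration.content DD = 1"
  by (simp add: content_Pair)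

locale LA =
  fixes f :: "complex \<Rightarrow> complex \<Rightarrow> complex \<Rightarrow> complex" and r R :: real
  assumes cont: "continuous_on {q. fst q \<noteq> 0} (\<lambda>q. f (fst q) (fst (snd q)) (snd (snd q)))"
    and hx: "\<And>s t. (\<lambda>x. f x s t) holomorphic_on -{0}"
    and hs: "\<And>x t. x \<noteq> 0 \<Longrightarrow> (\<lambda>s. f x s t) holomorphic_on UNIV"
    and ht: "\<And>x s. x \<noteq> 0 \<Longrightarrow> (\<lambda>t. f x s t) holomorphic_on UNIV"
    and r: "0 < r" "r \<le> R"
begin

abbreviation "c \<equiv> circlepath 0 (2 * R)"
abbreviation "c1 \<equiv> circlepath 0 (r / 2)"

definition "F2 q = f (c (snd (snd q))) (c (fst (snd q))) (c (fst q))"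
definition "F1 q = f (c1 (snd (snd q))) (c (fst (snd q))) (c (fst q))"

lemma R0: "R > 0" using r by linarith
lemma c_nz: "c u \<noteq> 0" using circ_nz[of "2 * R" u] R0 by simp
lemma c1_nz: "c1 u \<noteq> 0" using circ_nz[of "r / 2" u] r by simp
lemma norm_c: "norm (c u) = 2 * R" using norm_circ[of "2 * R" u] R0 by simp
lemma norm_c1: "norm (c1 u) = r / 2" using norm_circ[of "r / 2" u] r by simp

lemma cont_circ_comp [continuous_intros]: "continuous_on S g \<Longrightarrow> continuous_on S (\<lambda>x. circlepath 0 \<rho> (g x))"
  unfolding circlepath by (intro continuous_intros)

lemma cont_F2: "continuous_on S F2"
proof -
  have a: "continuous_on S (\<lambda>q. (c (snd (snd q)), c (fst (snd q)), c (fst q)))"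
    by (intro continuous_intros)
  have b: "(\<lambda>q. (c (snd (snd q)), c (fst (snd q)), c (fst q))) ` S \<subseteq> {q. fst q \<noteq> 0}"
    by (auto simp: c_nz)
  show ?thesis unfolding F2_def using continuous_on_compose2[OF cont a b] by simp
qed

lemma cont_F1: "continuous_on S F1"
proof -
  have a: "continuous_on S (\<lambda>q. (c1 (snd (snd q)), c (fst (snd q)), c (fst q)))"
    by (intro continuous_intros)
  have b: "(\<lambda>q. (c1 (snd (snd q)), c (fst (snd q)), c (fst q))) ` S \<subseteq> {q. fst q \<noteq> 0}"
    by (auto simp: c1_nz)
  show ?thesis unfolding F1_def using continuous_on_compose2[OF cont a b] by simp
qed

definition "inbox x s t \<longleftrightarrow> r \<le> norm x \<and> norm x \<le> R \<and> norm s \<le> R \<and> norm t \<le> R"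

lemma q_small:
  assumes "norm z \<le> R"
  shows "norm (z / c u) \<le> 1/2"
  unfolding norm_divide norm_c using assms R0 by (simp add: field_simps)

lemma q_small1:
  assumes "r \<le> norm x"
  shows "norm (c1 u / x) \<le> 1/2"
proof -
  have "x \<noteq> 0" using assms r by auto
  then show ?thesis unfolding norm_divide norm_c1 using assms r by (simp add: field_simps)
qed

definition "Phi x s t q = (F2 q * G (x / c (snd (snd q))) + F1 q * (c1 (snd (snd q)) / x) * G (c1 (snd (snd q)) / x))
   * G (s / c (fst (snd q))) * G (t / c (fst q))"

definition "PhiN N x s t q = (F2 q * GN N (x / c (snd (snd q))) + F1 q * (c1 (snd (snd q)) / x) * GN N (c1 (snd (snd q)) / x))
   * GN N (s / c (fst (snd q))) * GN N (t / c (fst q))"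

lemma cont_G:
  assumes "continuous_on S g" "\<And>q. q \<in> S \<Longrightarrow> norm (g q) \<le> 1/2"
  shows "continuous_on S (\<lambda>q. G (g q))"
proof -
  have "\<forall>q\<in>S. 1 - g q \<noteq> 0" using assms(2) one_minus_nz by blast
  then show ?thesis unfolding G_def using assms(1) by (intro continuous_intros) auto
qed

lemma cont_Phi:
  assumes "inbox x s t"
  shows "continuous_on S (Phi x s t)"
proof -
  have x0: "x \<noteq> 0" using assms r unfolding inbox_def by auto
  show ?thesis unfolding Phi_def using assms q_small q_small1 x0 unfolding inbox_def
    by (intro continuous_intros cont_F1 cont_F2 cont_G) (auto simp: c_nz)
qed

lemma cube_iter:
  fixes g :: "real \<times> real \<times> real \<Rightarrow> complex"
  assumes g: "continuous_on UNIV g"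
  shows "integral DD g = integral {0..1} (\<lambda>w. integral {0..1} (\<lambda>v. integral {0..1} (\<lambda>u. g (w, v, u))))"
proof -
  have "integral DD g = integral (cbox 0 1) (\<lambda>w. integral (cbox (0, 0) (1, 1)) (\<lambda>y. g (w, y)))"
    by (rule integral_prod_continuous) (rule continuous_on_subset[OF g], simp)
  also have "\<dots> = integral (cbox 0 1) (\<lambda>w. integral (cbox 0 1) (\<lambda>v. integral (cbox 0 1) (\<lambda>u. g (w, v, u))))"
  proof (rule integral_cong)
    fix w :: real
    have gw: "continuous_on UNIV (\<lambda>y. g (w, y))"
      by (rule continuous_on_compose2[OF g]) (auto intro: continuous_intros)
    show "integral (cbox (0, 0) (1, 1)) (\<lambda>y. g (w, y)) = integral (cbox 0 1) (\<lambda>v. integral (cbox 0 1) (\<lambda>u. g (w, v, u)))"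
      using integral_prod_continuous[OF continuous_on_subset[OF gw], of "0::real" "0::real" 1 1] by simp
  qed
  finally show ?thesis by (simp add: box_real(2))
qed

lemma repr:
  assumes b: "inbox x s t"
  shows "f x s t = integral DD (Phi x s t)"
proof -
  have x0: "x \<noteq> 0" and nx: "r \<le> norm x" "norm x \<le> R" and ns: "norm s \<le> R" and nt: "norm t \<le> R"
    using b r unfolding inbox_def by auto
  have e3: "f x (c v) (c w) = integral {0..1} (\<lambda>u. F2 (w, v, u) * G (x / c u) + F1 (w, v, u) * (c1 u / x) * G (c1 u / x))" for v w
    unfolding F1_def F2_def using cauchy_annulus[OF hx, of "r/2" x "2*R"] r nx by simp
  have e2: "f x s (c w) = integral {0..1} (\<lambda>v. f x (c v) (c w) * G (s / c v))" for w
    using cauchy_disc[OF hs[OF x0], of s "2*R"] ns R0 by simp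
  have e1: "f x s t = integral {0..1} (\<lambda>w. f x s (c w) * G (t / c w))"
    using cauchy_disc[OF ht[OF x0], of t "2*R"] nt R0 by simp
  have "f x s t = integral {0..1} (\<lambda>w. integral {0..1} (\<lambda>v. integral {0..1} (\<lambda>u. Phi x s t (w, v, u))))"
    unfolding e1 e2 e3 Phi_def by simp
  also have "\<dots> = integral DD (Phi x s t)"
    by (rule cube_iter[symmetric]) (rule cont_Phi[OF b])
  finally show ?thesis .
qed

definition "Acoef n m l q = F2 q * (1 / c (snd (snd q)))^n * (1 / c (fst (snd q)))^m * (1 / c (fst q))^l"
definition "Bcoef n m l q = F1 q * (c1 (snd (snd q)))^(n+1) * (1 / c (fst (snd q)))^m * (1 / c (fst q))^l"

lemma cont_Acoef: "continuous_on S (Acoef n m l)"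
  unfolding Acoef_def by (intro continuous_intros cont_F2) (auto simp: c_nz)
lemma cont_Bcoef: "continuous_on S (Bcoef n m l)"
  unfolding Bcoef_def by (intro continuous_intros cont_F1) (auto simp: c_nz)

lemma GN_expand: "GN N (z / w) = (\<Sum>n<N. z^n * (1 / w)^n)"
  unfolding GN_def by (simp add: power_divide)

lemma GN_expand1:
  assumes "x \<noteq> 0"
  shows "(z / x) * GN N (z / x) = (\<Sum>n<N. z^(n+1) * x powi (- (int n + 1)))"
  unfolding GN_def sum_distrib_left
proof (rule sum.cong)
  fix n
  have "x powi (- (int n + 1)) = 1 / x^(n+1)"
    by (metis of_nat_Suc power_int_minus power_int_of_nat inverse_eq_divide add.commute Suc_eq_plus1)
  then show "z / x * (z / x) ^ n = z ^ (n + 1) * x powi (- (int n + 1))"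
    by (simp add: power_divide field_simps)
qed simp

lemma triple_prod:
  fixes P S T :: "nat \<Rightarrow> complex"
  shows "(\<Sum>n\<in>A. P n) * (\<Sum>m\<in>B. S m) * (\<Sum>l\<in>C. T l) = (\<Sum>n\<in>A. \<Sum>m\<in>B. \<Sum>l\<in>C. P n * S m * T l)"
  by (subst sum_product, subst sum_distrib_right, subst sum_distrib_right, subst sum_distrib_left, rule refl)

lemma PhiN_expand:
  assumes x0: "x \<noteq> 0"
  shows "PhiN N x s t q = (\<Sum>n<N. \<Sum>m<N. \<Sum>l<N. (x^n * Acoef n m l q + x powi (- (int n + 1)) * Bcoef n m l q) * s^m * t^l)"
proof -
  define u v w where "u = snd (snd q)" "v = fst (snd q)" "w = fst q"
  have "PhiN N x s t q = (F2 q * GN N (x / c u) + F1 q * ((c1 u / x) * GN N (c1 u / x))) * GN N (s / c v) * GN N (t / c w)"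
    unfolding PhiN_def u_v_w_def by (simp add: mult.assoc)
  also have "\<dots> = (\<Sum>n<N. F2 q * (x^n * (1 / c u)^n) + F1 q * ((c1 u)^(n+1) * x powi (- (int n + 1))))
       * (\<Sum>m<N. s^m * (1 / c v)^m) * (\<Sum>l<N. t^l * (1 / c w)^l)"
    by (simp only: GN_expand1[OF x0]) (simp only: GN_expand sum_distrib_left sum.distrib)
  also have "\<dots> = (\<Sum>n<N. \<Sum>m<N. \<Sum>l<N. (F2 q * (x^n * (1 / c u)^n) + F1 q * ((c1 u)^(n+1) * x powi (- (int n + 1))))
       * (s^m * (1 / c v)^m) * (t^l * (1 / c w)^l))"
    by (rule triple_prod)
  also have "\<dots> = (\<Sum>n<N. \<Sum>m<N. \<Sum>l<N. (x^n * Acoef n m l q + x powi (- (int n + 1)) * Bcoef n m l q) * s^m * t^l)"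
    unfolding Acoef_def Bcoef_def u_v_w_def by (intro sum.cong refl) (simp add: algebra_simps)
  finally show ?thesis .
qed

lemma int_sum_cont:
  fixes g :: "'i \<Rightarrow> real \<times> real \<times> real \<Rightarrow> complex"
  assumes "finite I" "\<And>i. i \<in> I \<Longrightarrow> continuous_on DD (g i)"
  shows "integral DD (\<lambda>q. \<Sum>i\<in>I. g i q) = (\<Sum>i\<in>I. integral DD (g i))"
  by (rule integral_sum[OF assms(1)]) (rule integrable_continuous, rule assms(2))

lemma approx_int:
  assumes b: "inbox x s t"
  shows "integral DD (PhiN N x s t) = LP N (\<lambda>n m l. integral DD (Acoef n m l)) (\<lambda>n m l. integral DD (Bcoef n m l)) x s t"
proof -
  have x0: "x \<noteq> 0" using b r unfolding inbox_def by auto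
  define T where "T n m l q = (x^n * Acoef n m l q + x powi (- (int n + 1)) * Bcoef n m l q) * s^m * t^l" for n m l q
  have cT: "continuous_on S (T n m l)" for n m l S
    unfolding T_def by (intro continuous_intros cont_Acoef cont_Bcoef)
  have iT: "integral DD (T n m l) = (x^n * integral DD (Acoef n m l) + x powi (- (int n + 1)) * integral DD (Bcoef n m l)) * s^m * t^l" for n m l
  proof -
    have "integral DD (T n m l) = integral DD (\<lambda>q. x^n * Acoef n m l q + x powi (- (int n + 1)) * Bcoef n m l q) * s^m * t^l"
      unfolding T_def by (simp only: integral_mult_left)
    also have "integral DD (\<lambda>q. x^n * Acoef n m l q + x powi (- (int n + 1)) * Bcoef n m l q)
       = integral DD (\<lambda>q. x^n * Acoef n m l q) + integral DD (\<lambda>q. x powi (- (int n + 1)) * Bcoef n m l q)"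
      by (rule integral_add) (intro integrable_continuous continuous_intros cont_Acoef cont_Bcoef)+
    finally show ?thesis by simp
  qed
  have "integral DD (PhiN N x s t) = integral DD (\<lambda>q. \<Sum>n<N. \<Sum>m<N. \<Sum>l<N. T n m l q)"
    unfolding PhiN_expand[OF x0] T_def ..
  also have "\<dots> = (\<Sum>n<N. integral DD (\<lambda>q. \<Sum>m<N. \<Sum>l<N. T n m l q))"
    by (rule int_sum_cont) (auto intro!: continuous_on_sum cT)
  also have "\<dots> = (\<Sum>n<N. \<Sum>m<N. integral DD (\<lambda>q. \<Sum>l<N. T n m l q))"
    by (intro sum.cong refl int_sum_cont) (auto intro!: continuous_on_sum cT)
  also have "\<dots> = (\<Sum>n<N. \<Sum>m<N. \<Sum>l<N. integral DD (T n m l))"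
    by (intro sum.cong refl int_sum_cont) (auto intro!: cT)
  also have "\<dots> = LP N (\<lambda>n m l. integral DD (Acoef n m l)) (\<lambda>n m l. integral DD (Bcoef n m l)) x s t"
    unfolding iT LP_def by (simp add: ac_simps)
  finally show ?thesis .
qed

lemma cont_PhiN:
  assumes "inbox x s t"
  shows "continuous_on S (PhiN N x s t)"
proof -
  have x0: "x \<noteq> 0" using assms r unfolding inbox_def by auto
  show ?thesis unfolding PhiN_def GN_def using x0 by (intro continuous_intros cont_F1 cont_F2) (auto simp: c_nz)
qed

lemma Phi_bound:
  assumes b: "inbox x s t" and M: "norm (F2 q) \<le> M" "norm (F1 q) \<le> M"
  shows "norm (Phi x s t q - PhiN N x s t q) \<le> 36 * M * (1/2)^N"
proof -
  have x0: "x \<noteq> 0" and nx: "r \<le> norm x" "norm x \<le> R" and ns: "norm s \<le> R" and nt: "norm t \<le> R"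
    using b r unfolding inbox_def by auto
  define qa qb qs qt where "qa = x / c (snd (snd q))" "qb = c1 (snd (snd q)) / x" "qs = s / c (fst (snd q))" "qt = t / c (fst q)"
  have sa: "norm qa \<le> 1/2" "norm qb \<le> 1/2" "norm qs \<le> 1/2" "norm qt \<le> 1/2"
    unfolding qa_qb_qs_qt_def using q_small[OF nx(2)] q_small1[OF nx(1)] q_small[OF ns] q_small[OF nt] by auto
  have M0: "M \<ge> 0" using M(1) norm_ge_zero order_trans by blast
  define \<delta> :: real where "\<delta> = (1/2)^N"
  have d0: "\<delta> \<ge> 0" unfolding \<delta>_def by simp
  have ga: "norm (G qa) \<le> 2" "norm (GN N qa) \<le> 2" "norm (G qa - GN N qa) \<le> 2 * \<delta>"
    using geo_bounds[OF sa(1)] unfolding \<delta>_def by auto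
  have gb: "norm (G qb) \<le> 2" "norm (GN N qb) \<le> 2" "norm (G qb - GN N qb) \<le> 2 * \<delta>"
    using geo_bounds[OF sa(2)] unfolding \<delta>_def by auto
  have gs: "norm (G qs) \<le> 2" "norm (GN N qs) \<le> 2" "norm (G qs - GN N qs) \<le> 2 * \<delta>"
    using geo_bounds[OF sa(3)] unfolding \<delta>_def by auto
  have gt: "norm (G qt) \<le> 2" "norm (GN N qt) \<le> 2" "norm (G qt - GN N qt) \<le> 2 * \<delta>"
    using geo_bounds[OF sa(4)] unfolding \<delta>_def by auto

  define X X' where "X = F2 q * G qa + F1 q * qb * G qb" "X' = F2 q * GN N qa + F1 q * qb * GN N qb"
  have "norm (X - X') = norm (F2 q * (G qa - GN N qa) + F1 q * (qb * (G qb - GN N qb)))"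
    unfolding X_X'_def by (simp add: algebra_simps)
  also have "\<dots> \<le> norm (F2 q) * norm (G qa - GN N qa) + norm (F1 q) * (norm qb * norm (G qb - GN N qb))"
    by (rule order_trans[OF norm_triangle_ineq]) (simp add: norm_mult)
  also have "\<dots> \<le> M * (2 * \<delta>) + M * (1/2 * (2 * \<delta>))"
    by (intro add_mono mult_mono ga gb sa M) (simp_all add: M0 d0)
  finally have e1: "norm (X - X') \<le> 3 * M * \<delta>" by simp
  have "norm X' \<le> norm (F2 q) * norm (GN N qa) + norm (F1 q) * (norm qb * norm (GN N qb))"
    unfolding X_X'_def by (rule order_trans[OF norm_triangle_ineq]) (simp add: norm_mult mult.assoc)
  also have "\<dots> \<le> M * 2 + M * (1/2 * 2)"
    by (intro add_mono mult_mono ga gb sa M) (simp_all add: M0)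
  finally have e2: "norm X' \<le> 3 * M" by simp
  have "Phi x s t q - PhiN N x s t q = X * G qs * G qt - X' * GN N qs * GN N qt"
    unfolding Phi_def PhiN_def X_X'_def qa_qb_qs_qt_def ..
  also have "norm \<dots> \<le> 4 * (3 * M * \<delta>) + 2 * (3 * M) * (2 * \<delta>) + 2 * (3 * M) * (2 * \<delta>)"
    by (rule prod3_bound[OF e1 gs(1) gt(1) e2 gs(3) gs(2) gt(3)])
  finally show ?thesis unfolding \<delta>_def by simp
qed

lemma main:
  assumes e: "e > 0"
  shows "\<exists>N A B. \<forall>x s t. inbox x s t \<longrightarrow> norm (f x s t - LP N A B x s t) < e"
proof -
  have "compact (F2 ` DD)" "compact (F1 ` DD)"
    by (intro compact_continuous_image cont_F2 cont_F1 compact_cbox)+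
  then obtain M2 M1 where M2: "\<forall>y\<in>F2 ` DD. norm y \<le> M2" and M1: "\<forall>y\<in>F1 ` DD. norm y \<le> M1"
    by (meson bounded_iff compact_imp_bounded)
  define M where "M = max (max M1 M2) 0 + 1"
  have MM2: "norm (F2 q) \<le> M" "norm (F1 q) \<le> M" if "q \<in> DD" for q
    using M1 M2 that unfolding M_def by force+
  have M0: "M > 0" unfolding M_def by linarith
  obtain N where N: "(1/2::real)^N < e / (36 * M)"
    using real_arch_pow_inv[of "e / (36 * M)" "1/2"] e M0 by auto
  define A where "A n m l = integral DD (Acoef n m l)" for n m l
  define B where "B n m l = integral DD (Bcoef n m l)" for n m l
  show ?thesis
  proof (intro exI allI impI)
    fix x s t :: complex assume b: "inbox x s t"
    have "f x s t - LP N A B x s t = integral DD (Phi x s t) - integral DD (PhiN N x s t)"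
      unfolding A_def B_def approx_int[OF b] repr[OF b, symmetric] ..
    also have "\<dots> = integral DD (\<lambda>q. Phi x s t q - PhiN N x s t q)"
      by (rule integral_diff[symmetric]) (intro integrable_continuous cont_Phi cont_PhiN b)+
    finally have eq: "f x s t - LP N A B x s t = integral DD (\<lambda>q. Phi x s t q - PhiN N x s t q)" .
    have "norm (integral DD (\<lambda>q. Phi x s t q - PhiN N x s t q)) \<le> 36 * M * (1/2)^N * Henstock_Kurzweil_Integration.content DD"
    proof (rule has_integral_bound)
      show "0 \<le> 36 * M * (1 / 2) ^ N" using M0 by simp
      show "((\<lambda>q. Phi x s t q - PhiN N x s t q) has_integral integral DD (\<lambda>q. Phi x s t q - PhiN N x s t q)) DD"
        by (intro integrable_integral integrable_continuous continuous_intros cont_Phi cont_PhiN b)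
      show "norm (Phi x s t q - PhiN N x s t q) \<le> 36 * M * (1 / 2) ^ N" if "q \<in> DD" for q
        by (rule Phi_bound[OF b MM2[OF that]])
    qed
    also have "\<dots> < e" unfolding content_DD using N M0 by (simp add: field_simps)
    finally show "norm (f x s t - LP N A B x s t) < e" unfolding eq .
  qed
qed

end



lemma Q_sum:
  assumes zero: "Q (\<lambda>v. 0)" and add: "\<And>\<phi> \<psi>. Q \<phi> \<Longrightarrow> Q \<psi> \<Longrightarrow> Q (\<lambda>v. \<phi> v + \<psi> v)"
  shows "finite I \<Longrightarrow> (\<And>i. i \<in> I \<Longrightarrow> Q (g i)) \<Longrightarrow> Q (\<lambda>v. \<Sum>i\<in>I. g i v)"
proof (induction I rule: finite_induct)
  case empty
  then show ?case using zero by simp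
next
  case (insert i I)
  then have "Q (\<lambda>v. g i v + (\<Sum>i\<in>I. g i v))" by (intro add) auto
  then show ?case using insert by simp
qed

lemma Q_LP:
  fixes Q :: "(complex^4 \<Rightarrow> complex) \<Rightarrow> bool"
  assumes zero: "Q (\<lambda>v. 0)" and add: "\<And>\<phi> \<psi>. Q \<phi> \<Longrightarrow> Q \<psi> \<Longrightarrow> Q (\<lambda>v. \<phi> v + \<psi> v)"
    and mon: "\<And>k a b c. Q (\<lambda>v. c * mon k a b v)"
    and cong: "\<And>\<phi> \<psi>. Q \<phi> \<Longrightarrow> (\<And>v. \<phi> v = \<psi> v) \<Longrightarrow> Q \<psi>"
  shows "Q (\<lambda>v. LP N A B (v$1) (v$3) (v$4))"
proof -
  have trm: "Q (\<lambda>v. (A n m l * (v$1)^n + B n m l * (v$1) powi (- (int n + 1))) * (v$3)^m * (v$4)^l)" for n m l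
  proof -
    have "Q (\<lambda>v. A n m l * mon (int n) m l v + B n m l * mon (- (int n + 1)) m l v)"
      by (intro add mon)
    then show ?thesis
      by (rule cong) (simp add: mon_def algebra_simps power_int_of_nat)
  qed
  show ?thesis unfolding LP_def
    by (intro Q_sum[where Q=Q, OF zero add] trm) auto
qed

lemma CL_LP_x: "cf (\<lambda>v. LP N A B (v$1) (v$3) (v$4)) Z Z \<in> CL"
proof (rule Q_LP[where Q="\<lambda>\<phi>. cf \<phi> Z Z \<in> CL"])
  show "cf Z Z Z \<in> CL" by (rule CL_zero)
  show "cf (\<lambda>v. \<phi> v + \<psi> v) Z Z \<in> CL" if "cf \<phi> Z Z \<in> CL" "cf \<psi> Z Z \<in> CL" for \<phi> \<psi>
    using CL_lin[OF that, of 1] by simp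
  show "cf (\<lambda>v. c * mon k a b v) Z Z \<in> CL" for k a b c
    using CL_smult[OF mono_x[of k a b], of c] by simp
  show "cf \<psi> Z Z \<in> CL" if "cf \<phi> Z Z \<in> CL" "\<And>v. \<phi> v = \<psi> v" for \<phi> \<psi>
    using that by (metis ext)
qed

lemma CL_LP_s: "cf Z (\<lambda>v. LP N A B (v$1) (v$3) (v$4)) Z \<in> CL"
proof (rule Q_LP[where Q="\<lambda>\<phi>. cf Z \<phi> Z \<in> CL"])
  show "cf Z Z Z \<in> CL" by (rule CL_zero)
  show "cf Z (\<lambda>v. \<phi> v + \<psi> v) Z \<in> CL" if "cf Z \<phi> Z \<in> CL" "cf Z \<psi> Z \<in> CL" for \<phi> \<psi>
    using CL_lin[OF that, of 1] by simp
  show "cf Z (\<lambda>v. c * mon k a b v) Z \<in> CL" for k a b c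
    using CL_smult[OF mono_s[of k a b], of c] by simp
  show "cf Z \<psi> Z \<in> CL" if "cf Z \<phi> Z \<in> CL" "\<And>v. \<phi> v = \<psi> v" for \<phi> \<psi>
    using that by (metis ext)
qed

lemma CL_LP_t: "cf Z Z (\<lambda>v. LP N A B (v$1) (v$3) (v$4)) \<in> CL"
proof (rule Q_LP[where Q="\<lambda>\<phi>. cf Z Z \<phi> \<in> CL"])
  show "cf Z Z Z \<in> CL" by (rule CL_zero)
  show "cf Z Z (\<lambda>v. \<phi> v + \<psi> v) \<in> CL" if "cf Z Z \<phi> \<in> CL" "cf Z Z \<psi> \<in> CL" for \<phi> \<psi>
    using CL_lin[OF that, of 1] by simp
  show "cf Z Z (\<lambda>v. c * mon k a b v) \<in> CL" for k a b c
    using CL_smult[OF mono_t[of k a b], of c] by simp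
  show "cf Z Z \<psi> \<in> CL" if "cf Z Z \<phi> \<in> CL" "\<And>v. \<phi> v = \<psi> v" for \<phi> \<psi>
    using that by (metis ext)
qed

lemma CL_three: "cf P1 Z Z \<in> CL \<Longrightarrow> cf Z P3 Z \<in> CL \<Longrightarrow> cf Z Z P4 \<in> CL \<Longrightarrow> cf P1 P3 P4 \<in> CL"
proof -
  assume a: "cf P1 Z Z \<in> CL" "cf Z P3 Z \<in> CL" "cf Z Z P4 \<in> CL"
  have "cf (\<lambda>v. P1 v + 1 * 0) (\<lambda>v. 0 + 1 * P3 v) (\<lambda>v. 0 + 1 * 0) \<in> CL" by (rule CL_lin[OF a(1,2)])
  then have b: "cf P1 P3 Z \<in> CL" by simp
  have "cf (\<lambda>v. P1 v + 1 * 0) (\<lambda>v. P3 v + 1 * 0) (\<lambda>v. 0 + 1 * P4 v) \<in> CL" by (rule CL_lin[OF b a(3)])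
  then show ?thesis by simp
qed



lemma V_cont:
  assumes V: "holo_vf MM V"
  shows "continuous_on MM V"
proof -
  have "continuous (at p within MM) V" if p: "p \<in> MM" for p
  proof -
    obtain U g where U: "open U" "p \<in> U" and hg: "holo_on g U" and eq: "\<forall>q\<in>U \<inter> MM. g q = V q"
      using V p unfolding holo_vf_def holo_on_set_def by blast
    obtain L where L: "(g has_derivative L) (at p)" using hg U unfolding holo_on_def by blast
    have gc: "continuous (at p within MM) g"
      by (rule continuous_at_imp_continuous_within[OF has_derivative_continuous[OF L]])
    obtain d where d: "d > 0" "ball p d \<subseteq> U" using U open_contains_ball by blast
    show ?thesis
      by (rule continuous_transform_within[OF gc d(1) p]) (use eq d in \<open>force simp: dist_commute subset_iff\<close>)
  qed
  then show ?thesis by (simp add: continuous_on_eq_continuous_within)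
qed

lemma V_curve_diff:
  assumes V: "holo_vf MM V" and ZZ: "open Zs" "z0 \<in> Zs" and gc: "continuous_on Zs g" and gi: "g ` Zs \<subseteq> MM"
    and gd: "(g has_derivative (\<lambda>h. h *s d)) (at z0)"
  shows "(\<lambda>z. V (g z) $ i) field_differentiable (at z0)"
proof -
  have p: "g z0 \<in> MM" using gi ZZ by auto
  obtain U G where U: "open U" "g z0 \<in> U" and hg: "holo_on G U" and eq: "\<forall>q\<in>U \<inter> MM. G q = V q"
    using V p unfolding holo_vf_def holo_on_set_def by blast
  obtain L where L: "(G has_derivative L) (at (g z0))" and cl: "complex_linear L"
    using hg U unfolding holo_on_def by blast
  have "((G \<circ> g) has_derivative (L \<circ> (\<lambda>h. h *s d))) (at z0)"
    by (rule diff_chain_at[OF gd L])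
  then have "((\<lambda>z. G (g z) $ i) has_derivative (\<lambda>h. (L (h *s d)) $ i)) (at z0)"
    using has_derivative_vec_nth'[of "G \<circ> g" "L \<circ> (\<lambda>h. h *s d)" "at z0" i] by (simp add: o_def)
  moreover have "(\<lambda>h. (L (h *s d)) $ i) = (*) (L d $ i)"
    using cl unfolding complex_linear_def by (auto simp: fun_eq_iff mult.commute)
  ultimately have d1: "((\<lambda>z. G (g z) $ i) has_field_derivative (L d $ i)) (at z0)"
    unfolding has_field_derivative_def by simp
  have o: "open (Zs \<inter> g -` U)" by (rule continuous_open_preimage[OF gc ZZ(1) U(1)])
  have "((\<lambda>z. V (g z) $ i) has_field_derivative (L d $ i)) (at z0)"
    by (rule has_field_derivative_transform_within_open[OF d1 o]) (use ZZ U eq gi in auto)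
  then show ?thesis unfolding field_differentiable_def by blast
qed

lemma cont_vec4 [continuous_intros]:
  assumes "continuous_on S a" "continuous_on S b" "continuous_on S c" "continuous_on S d"
  shows "continuous_on S (\<lambda>x. vec4 (a x) (b x) (c x) (d x))"
  unfolding vec4_def
proof (rule continuous_on_vec_lambda)
  fix i :: 4
  show "continuous_on S (\<lambda>x. if i = 1 then a x else if i = 2 then b x else if i = 3 then c x else d x)"
    by (cases "i = 1"; cases "i = 2"; cases "i = 3") (simp_all add: assms)
qed

lemma cont_lift: "continuous_on {q. fst q \<noteq> 0} (\<lambda>q. lift (fst q) (fst (snd q)) (snd (snd q)))"
  unfolding lift_def yv_def by (intro continuous_intros) auto

lemma LA_V:
  assumes V: "holo_vf MM V" and r: "0 < r" "r \<le> R"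
  shows "LA (\<lambda>x s t. V (lift x s t) $ i) r R"
proof
  have "continuous_on {q. fst q \<noteq> 0} (\<lambda>q. V (lift (fst q) (fst (snd q)) (snd (snd q))))"
    by (rule continuous_on_compose2[OF V_cont[OF V] cont_lift]) (simp add: image_subset_iff lift_in_MM del: Diff_iff)
  then show "continuous_on {q. fst q \<noteq> 0} (\<lambda>q. V (lift (fst q) (fst (snd q)) (snd (snd q))) $ i)"
    by (rule continuous_on_component)
next
  fix s t :: complex
  show "(\<lambda>x. V (lift x s t) $ i) holomorphic_on - {0}"
    unfolding holomorphic_on_def
  proof
    fix z0 :: complex assume z0: "z0 \<in> - {0}"
    have "(\<lambda>z. V (lift z s t) $ i) field_differentiable (at z0)"
    proof (rule V_curve_diff[OF V _ z0])
      show "continuous_on (- {0}) (\<lambda>z. lift z s t)"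
        unfolding lift_def yv_def by (intro continuous_intros) auto
      show "(\<lambda>z. lift z s t) ` (- {0}) \<subseteq> MM" using lift_in_MM by auto
      show "((\<lambda>z. lift z s t) has_derivative (\<lambda>h. h *s tang (lift z0 s t) 1 0 0)) (at z0)"
        using lift_deriv[of "\<lambda>z. z" 1 z0 UNIV "\<lambda>z. s" 0 "\<lambda>z. t" 0] z0
        by (auto intro: derivative_eq_intros)
    qed auto
    then show "(\<lambda>z. V (lift z s t) $ i) field_differentiable (at z0 within - {0})"
      by (rule field_differentiable_at_within)
  qed
next
  fix x t :: complex assume x0: "x \<noteq> 0"
  show "(\<lambda>s. V (lift x s t) $ i) holomorphic_on UNIV"
    unfolding holomorphic_on_def
  proof
    fix z0 :: complex
    have "(\<lambda>z. V (lift x z t) $ i) field_differentiable (at z0)"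
    proof (rule V_curve_diff[OF V])
      show "continuous_on UNIV (\<lambda>z. lift x z t)"
        unfolding lift_def yv_def using x0 by (intro continuous_intros) auto
      show "(\<lambda>z. lift x z t) ` UNIV \<subseteq> MM" using lift_in_MM x0 by auto
      show "((\<lambda>z. lift x z t) has_derivative (\<lambda>h. h *s tang (lift x z0 t) 0 1 0)) (at z0)"
        using lift_deriv[of "\<lambda>z. x" 0 z0 UNIV "\<lambda>z. z" 1 "\<lambda>z. t" 0] x0
        by (auto intro: derivative_eq_intros)
    qed auto
    then show "(\<lambda>z. V (lift x z t) $ i) field_differentiable (at z0 within UNIV)"
      by simp
  qed
next
  fix x s :: complex assume x0: "x \<noteq> 0"
  show "(\<lambda>t. V (lift x s t) $ i) holomorphic_on UNIV"
    unfolding holomorphic_on_def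
  proof
    fix z0 :: complex
    have "(\<lambda>z. V (lift x s z) $ i) field_differentiable (at z0)"
    proof (rule V_curve_diff[OF V])
      show "continuous_on UNIV (\<lambda>z. lift x s z)"
        unfolding lift_def yv_def using x0 by (intro continuous_intros) auto
      show "(\<lambda>z. lift x s z) ` UNIV \<subseteq> MM" using lift_in_MM x0 by auto
      show "((\<lambda>z. lift x s z) has_derivative (\<lambda>h. h *s tang (lift x s z0) 0 0 1)) (at z0)"
        using lift_deriv[of "\<lambda>z. x" 0 z0 UNIV "\<lambda>z. s" 0 "\<lambda>z. z" 1] x0
        by (auto intro: derivative_eq_intros)
    qed auto
    then show "(\<lambda>z. V (lift x s z) $ i) field_differentiable (at z0 within UNIV)"
      by simp
  qed
qed (use r in auto)



definition kap :: "complex^4 \<Rightarrow> real" where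
  "kap p = (norm (2 * p$1 * p$2 + 1) + 2 * norm (p$3) + 3 * norm (p$4)^2) / norm (p$1)^2"

lemma ty_bound:
  assumes x: "p$1 \<noteq> 0" and "norm a \<le> d" "norm b \<le> d" "norm c \<le> d"
  shows "norm (ty p a b c) \<le> kap p * d"
proof -
  have "norm ((2 * p$1 * p$2 + 1) * a + 2 * p$3 * b + 3 * (p$4)^2 * c)
      \<le> norm (2 * p$1 * p$2 + 1) * norm a + 2 * norm (p$3) * norm b + 3 * norm (p$4)^2 * norm c"
    by (rule order_trans[OF norm_triangle_ineq] order_trans[OF add_mono[OF norm_triangle_ineq order_refl]])+
       (simp add: norm_mult norm_power)
  also have "\<dots> \<le> norm (2 * p$1 * p$2 + 1) * d + 2 * norm (p$3) * d + 3 * norm (p$4)^2 * d"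
    by (intro add_mono mult_left_mono assms) auto
  finally have n: "norm ((2 * p$1 * p$2 + 1) * a + 2 * p$3 * b + 3 * (p$4)^2 * c) \<le>
      (norm (2 * p$1 * p$2 + 1) + 2 * norm (p$3) + 3 * norm (p$4)^2) * d" by (simp add: algebra_simps)
  have "norm (ty p a b c) = norm ((2 * p$1 * p$2 + 1) * a + 2 * p$3 * b + 3 * (p$4)^2 * c) / norm (p$1)^2"
    unfolding ty_def by (simp only: norm_divide norm_minus_cancel norm_power)
  also have "\<dots> \<le> (norm (2 * p$1 * p$2 + 1) + 2 * norm (p$3) + 3 * norm (p$4)^2) * d / norm (p$1)^2"
    by (rule divide_right_mono[OF n]) simp
  finally show ?thesis unfolding kap_def by simp
qed

lemma ty_diff: "p$1 \<noteq> 0 \<Longrightarrow> ty p a b c - ty p a' b' c' = ty p (a - a') (b - b') (c - c')"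
  unfolding ty_def by (simp add: field_simps)

theorem lemma5p3:
  shows "density_property (KR - KR_H)"
  unfolding density_property_def
proof (intro allI impI)
  fix V K and e :: real
  assume a: "holo_vf (KR - KR_H) V \<and> compact K \<and> K \<subseteq> KR - KR_H \<and> e > 0"
  then have V: "holo_vf MM V" and K: "compact K" and KM: "K \<subseteq> MM" and e: "e > 0" by auto
  have x0K: "v$1 \<noteq> 0" if "v \<in> K" for v
  proof -
    have "v \<in> MM" using KM that by blast
    then show ?thesis by (rule MM_x_nz)
  qed
  obtain B where B: "\<forall>v\<in>K. norm v \<le> B"
    using compact_imp_bounded[OF K] bounded_iff by blast
  have "continuous_on K (\<lambda>v. inverse (v$1))"
    using x0K by (intro continuous_intros) auto
  then obtain B' where B': "\<forall>y\<in>(\<lambda>v. inverse (v$1)) ` K. norm y \<le> B'"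
    using compact_imp_bounded[OF compact_continuous_image[OF _ K]] bounded_iff by metis
  have "continuous_on K kap"
    unfolding kap_def using x0K by (intro continuous_intros) auto
  then obtain C where C: "\<forall>y\<in>kap ` K. norm y \<le> C"
    using compact_imp_bounded[OF compact_continuous_image[OF _ K]] bounded_iff by metis
  define C' where "C' = max C 0"
  define r where "r = 1 / max B' 1"
  define R where "R = max B r"
  have r0: "0 < r" and rR: "r \<le> R" unfolding r_def R_def by auto
  have inb: "r \<le> norm (v$1) \<and> norm (v$1) \<le> R \<and> norm (v$3) \<le> R \<and> norm (v$4) \<le> R" if v: "v \<in> K" for v
  proof -
    have "norm (v$i) \<le> R" for i using B v Finite_Cartesian_Product.norm_nth_le[of v i] unfolding R_def by force
    moreover have "r \<le> norm (v$1)"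
    proof -
      have "norm (inverse (v$1)) \<le> max B' 1" using B' v by force
      then have "1 / norm (v$1) \<le> max B' 1" by (simp add: norm_inverse divide_inverse)
      then show ?thesis unfolding r_def using x0K[OF v]
        by (simp add: field_simps)
    qed
    ultimately show ?thesis by auto
  qed
  define \<delta> where "\<delta> = e / (4 + C')"
  have C'0: "C' \<ge> 0" unfolding C'_def by simp
  have d0: "\<delta> > 0" unfolding \<delta>_def using e C'0 by simp
  have kapK: "kap v \<le> C'" if "v \<in> K" for v using C that unfolding C'_def by force
  note LAi = LA_V[OF V r0 rR]
  obtain N1 A1 B1 where a1: "\<forall>x s t. LA.inbox r R x s t \<longrightarrow> norm (V (lift x s t) $ 1 - LP N1 A1 B1 x s t) < \<delta>"
    using LA.main[OF LAi[of 1] d0] by blast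
  obtain N3 A3 B3 where a3: "\<forall>x s t. LA.inbox r R x s t \<longrightarrow> norm (V (lift x s t) $ 3 - LP N3 A3 B3 x s t) < \<delta>"
    using LA.main[OF LAi[of 3] d0] by blast
  obtain N4 A4 B4 where a4: "\<forall>x s t. LA.inbox r R x s t \<longrightarrow> norm (V (lift x s t) $ 4 - LP N4 A4 B4 x s t) < \<delta>"
    using LA.main[OF LAi[of 4] d0] by blast
  define P1 where "P1 (v::complex^4) = LP N1 A1 B1 (v$1) (v$3) (v$4)" for v
  define P3 where "P3 (v::complex^4) = LP N3 A3 B3 (v$1) (v$3) (v$4)" for v
  define P4 where "P4 (v::complex^4) = LP N4 A4 B4 (v$1) (v$3) (v$4)" for v
  define W where "W = cf P1 P3 P4"
  have WL: "W \<in> CL" unfolding W_def P1_def P3_def P4_def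
    by (rule CL_three[OF CL_LP_x CL_LP_s CL_LP_t])
  have "\<forall>p\<in>K. norm (V p - W p) < e"
  proof
    fix p assume pK: "p \<in> K"
    have pM: "p \<in> MM" using pK KM by (rule subsetD[rotated])
    have x0: "p$1 \<noteq> 0" using x0K[OF pK] .
    have ib: "LA.inbox r R (p$1) (p$3) (p$4)"
      using inb[OF pK] LA.inbox_def[OF LAi[of 1]] by auto
    have lp: "lift (p$1) (p$3) (p$4) = p" by (rule lift_coords[OF pM])
    have d1: "norm (V p $ 1 - P1 p) < \<delta>" using a1 ib lp unfolding P1_def by metis
    have d3: "norm (V p $ 3 - P3 p) < \<delta>" using a3 ib lp unfolding P3_def by metis
    have d4: "norm (V p $ 4 - P4 p) < \<delta>" using a4 ib lp unfolding P4_def by metis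
    have "\<forall>p\<in>MM. tangent_vec MM p (V p)" using V unfolding holo_vf_def by (rule conjunct1[OF conjunct2])
    then have tv: "tangent_vec MM p (V p)" using pM by (rule bspec)
    have Vp: "V p = tang p (V p $ 1) (V p $ 3) (V p $ 4)"
      unfolding tang_def using tangent_ty[OF pM tv] vec4_eta[of "V p"] by simp
    have Wp: "W p = tang p (P1 p) (P3 p) (P4 p)" unfolding W_def by (rule cf_in[OF pM])
    have eqv: "V p - W p = vec4 (V p $ 1 - P1 p) (ty p (V p $ 1 - P1 p) (V p $ 3 - P3 p) (V p $ 4 - P4 p))
         (V p $ 3 - P3 p) (V p $ 4 - P4 p)"
      by (subst Vp, subst Wp) (simp add: tang_def vec4_diff ty_diff[OF x0])
    have "norm (V p - W p) \<le> norm (V p $ 1 - P1 p) + norm (ty p (V p $ 1 - P1 p) (V p $ 3 - P3 p) (V p $ 4 - P4 p))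
         + norm (V p $ 3 - P3 p) + norm (V p $ 4 - P4 p)"
      unfolding eqv by (rule norm_vec4)
    also have "\<dots> < \<delta> + kap p * \<delta> + \<delta> + \<delta>"
      using d1 d3 d4 ty_bound[OF x0, of "V p $ 1 - P1 p" \<delta> "V p $ 3 - P3 p" "V p $ 4 - P4 p"]
      by (intro add_less_le_mono add_le_less_mono) auto
    also have "\<dots> \<le> \<delta> + C' * \<delta> + \<delta> + \<delta>"
      using kapK[OF pK] d0 by (simp add: mult_right_mono)
    also have "\<dots> = (3 + C') * \<delta>" by (simp add: algebra_simps)
    also have "\<dots> < (4 + C') * \<delta>" using d0 by (intro mult_strict_right_mono) auto
    also have "\<dots> = e" unfolding \<delta>_def using C'0 by simp
    finally show "norm (V p - W p) < e" .
  qed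
  then show "\<exists>W\<in>complete_lie_alg (KR - KR_H). \<forall>p\<in>K. norm (V p - W p) < e"
    using WL by blast
qed


end
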